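(* Let $d,D\in\mathbb{N}^+$ and let $\mathcal{F}\subseteq C(\mathbb{R}^{d(d+1)/2},\mathbb{R}^{D(D+1)/2})$ be dense for the topology of uniform convergence on compacts. Then for any $A\in P_d^+$ and $B\in P_D^+$, the set $\{\operatorname{Exp}_B\circ f\circ\operatorname{Log}_A: f\in\mathcal{F}\}$ is dense in $C(P_d^+,P_D^+)$ for the topology of uniform convergence on compacts. In particular, if $\sigma$ is a continuous, locally bounded and non-polynomial activation function, then $\{\operatorname{Exp}_B\circ f\circ\operatorname{Log}_A: f\in\mathcal{NN}\}$ is dense in $C(P_d^+,P_D^+)$ for this topology.
   Context: $P_d^+$ is the set of $d\times d$ real symmetric positive-definite matrices, a Cartan–Hadamard manifold under the affine-invariant Riemannian metric, with its usual topology (the uniform convergence on compacts topology on $C(P_d^+,P_D^+)$ is taken w.r.t. the Riemannian distance, which induces this topology). The space $\mathrm{Sym}_k$ of $k\times k$ symmetric matrices is identified with $\mathbb{R}^{k(k+1)/2}$ by a fixed linear isomorphism. For $A\in P_d^+$, $\operatorname{Log}_A:P_d^+\to\mathrm{Sym}_d$, $\operatorname{Log}_A(C)=\sqrt{A}\log(\sqrt{A}^{-1}C\sqrt{A}^{-1})\sqrt{A}$, and for $B\in P_D^+$, $\operatorname{Exp}_B:\mathrm{Sym}_D\to P_D^+$, $\operatorname{Exp}_B(V)=\sqrt{B}\exp(\sqrt{B}^{-1}V\sqrt{B}^{-1})\sqrt{B}$, where $\exp,\log$ are the matrix exponential and logarithm. $\mathcal{NN}$ is the set of feed-forward networks $f=W\circ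 f^{(J)}$, $f^{(j)}=\sigma\bullet(W^{(j)}\circ f^{(j-1)})$, $f^{(0)}(x)=x$, with affine maps $W,W^{(j)}$ of arbitrary widths, from $\mathbb{R}^{d(d+1)/2}$ to $\mathbb{R}^{D(D+1)/2}$. *)

theory Defs
  imports "HOL-Analysis.Analysis" "HOL-Computational_Algebra.Polynomial"
begin

definition sym_mats :: "(real^'n^'n) set" where
  "sym_mats = {M. transpose M = M}"

definition spd :: "(real^'n^'n) set" where
  "spd = {M. transpose M = M \<and> (\<forall>x::real^'n. x \<noteq> 0 \<longrightarrow> x \<bullet> (M *v x) > 0)}"

primrec mpow :: "real^'n^'n \<Rightarrow> nat \<Rightarrow> real^'n^'n" where
  "mpow M 0 = mat 1"
| "mpow M (Suc k) = M ** mpow M k"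

definition mexp :: "real^'n^'n \<Rightarrow> real^'n^'n" where
  "mexp M = (\<Sum>k. (1 / fact k) *\<^sub>R mpow M k)"

definition mlog :: "real^'n^'n \<Rightarrow> real^'n^'n" where
  "mlog C = (THE L. L \<in> sym_mats \<and> mexp L = C)"

definition msqrt :: "real^'n^'n \<Rightarrow> real^'n^'n" where
  "msqrt A = (THE S. S \<in> spd \<and> S ** S = A)"

text \<open>Riemannian logarithm and exponential maps of the affine-invariant metric.\<close>
definition RLog :: "real^'n^'n \<Rightarrow> real^'n^'n \<Rightarrow> real^'n^'n" where
  "RLog A C = msqrt A ** mlog (matrix_inv (msqrt A) ** C ** matrix_inv (msqrt A)) ** msqrt A"

definition RExp :: "real^'n^'n \<Rightarrow> real^'n^'n \<Rightarrow> real^'n^'n" where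
  "RExp B V = msqrt B ** mexp (matrix_inv (msqrt B) ** V ** matrix_inv (msqrt B)) ** msqrt B"

text \<open>Affine-invariant Riemannian distance: Frobenius norm of log(A^-1/2 B A^-1/2)
  (the norm on real^'n^'n is the Frobenius norm).\<close>
definition ai_dist :: "real^'n^'n \<Rightarrow> real^'n^'n \<Rightarrow> real" where
  "ai_dist A B = norm (mlog (matrix_inv (msqrt A) ** B ** matrix_inv (msqrt A)))"

definition ucc_dense :: "'a::topological_space set \<Rightarrow> 'b::topological_space set \<Rightarrow>
    ('b \<Rightarrow> 'b \<Rightarrow> real) \<Rightarrow> ('a \<Rightarrow> 'b) set \<Rightarrow> bool" where
  "ucc_dense X Y \<delta> F \<longleftrightarrow>
     (\<forall>g. continuous_on X g \<and> g ` X \<subseteq> Y \<longrightarrow>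
        (\<forall>K \<epsilon>. compact K \<and> K \<subseteq> X \<and> \<epsilon> > 0 \<longrightarrow>
           (\<exists>f\<in>F. \<forall>x\<in>K. \<delta> (f x) (g x) < \<epsilon>)))"

definition locally_bounded :: "(real \<Rightarrow> real) \<Rightarrow> bool" where
  "locally_bounded \<sigma> \<longleftrightarrow> (\<forall>x. \<exists>e>0. bounded (\<sigma> ` ball x e))"

definition is_polynomial_fun :: "(real \<Rightarrow> real) \<Rightarrow> bool" where
  "is_polynomial_fun \<sigma> \<longleftrightarrow> (\<exists>p::real poly. \<forall>x. \<sigma> x = poly p x)"

text \<open>A vector of R^w is
  represented as a function nat \<Rightarrow> real vanishing from index w on.\<close>
inductive nn_hidden :: "(real \<Rightarrow> real) \<Rightarrow> (real^'m \<Rightarrow> nat \<Rightarrow> real) \<Rightarrow> nat \<Rightarrow> bool"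
  for \<sigma> :: "real \<Rightarrow> real" where
  first: "nn_hidden \<sigma> (\<lambda>x i. if i < w then \<sigma> ((\<Sum>j\<in>UNIV. W i j * x $ j) + b i) else 0) w"
| step: "nn_hidden \<sigma> h p \<Longrightarrow>
         nn_hidden \<sigma> (\<lambda>x i. if i < q then \<sigma> ((\<Sum>k<p. W i k * h x k) + b i) else 0) q"

definition NN :: "(real \<Rightarrow> real) \<Rightarrow> (real^'m \<Rightarrow> real^'n) set" where
  "NN \<sigma> = {f. (\<exists>W b. f = (\<lambda>x. \<chi> j. (\<Sum>i\<in>UNIV. W j i * x $ i) + b j))
              \<or> (\<exists>h w W b. nn_hidden \<sigma> h w \<and> f = (\<lambda>x. \<chi> j. (\<Sum>k<w. W j k * h x k) + b j))}"

end

theory Submission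
  imports Defs
begin

lemma cont_mmult[continuous_intros]:
  fixes f :: "'a::topological_space \<Rightarrow> real^'n^'m" and g :: "'a \<Rightarrow> real^'p^'n"
  assumes "continuous_on S f" "continuous_on S g"
  shows "continuous_on S (\<lambda>x. f x ** g x)"
  unfolding matrix_matrix_mult_def
  by (intro continuous_intros assms)

lemma cont_mvmult[continuous_intros]:
  fixes f :: "'a::topological_space \<Rightarrow> real^'n^'m" and g :: "'a \<Rightarrow> real^'n"
  assumes "continuous_on S f" "continuous_on S g"
  shows "continuous_on S (\<lambda>x. f x *v g x)"
  unfolding matrix_vector_mult_def
  by (intro continuous_intros assms)

lemma sym_dot:
  fixes M :: "real^'n^'n"
  assumes "transpose M = M"
  shows "(M *v x) \<bullet> y = x \<bullet> (M *v y)"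
proof -
  have "x \<bullet> (M *v y) = (x v* M) \<bullet> y" by (simp add: dot_lmul_matrix)
  also have "x v* M = transpose M *v x" by simp
  finally show ?thesis using assms by (simp add: inner_commute)
qed

lemma eigvec_exists:
  fixes M :: "real^'n^'n"
  assumes sym: "transpose M = M" and S: "subspace S" and nz: "S \<noteq> {0}"
    and inv: "\<And>x. x \<in> S \<Longrightarrow> M *v x \<in> S"
  shows "\<exists>v\<in>S. norm v = 1 \<and> (\<exists>l. M *v v = l *\<^sub>R v)"
proof -
  let ?T = "S \<inter> sphere 0 1"
  have cT: "compact ?T"
    by (simp add: S closed_subspace closed_Int_compact)
  obtain x where x: "x \<in> S" "x \<noteq> 0" using nz S subspace_0 by blast
  have "(1 / norm x) *\<^sub>R x \<in> ?T" using x S by (simp add: subspace_scale)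
  then have neT: "?T \<noteq> {}" by blast
  have "continuous_on ?T (\<lambda>x. x \<bullet> (M *v x))"
    by (intro continuous_intros)
  then obtain v where v: "v \<in> ?T" and vmax: "\<And>y. y \<in> ?T \<Longrightarrow> y \<bullet> (M *v y) \<le> v \<bullet> (M *v v)"
    using continuous_attains_sup[OF cT neT] by blast
  define l where "l = v \<bullet> (M *v v)"
  have vS: "v \<in> S" and nv: "norm v = 1" using v by auto
  have vv: "v \<bullet> v = 1" using nv by (simp add: norm_eq_1)
  have bound: "y \<bullet> (M *v y) \<le> l * (y \<bullet> y)" if yS: "y \<in> S" for y
  proof (cases "y = 0")
    case True then show ?thesis by simp
  next
    case False
    let ?z = "(1 / norm y) *\<^sub>R y"
    have "?z \<in> ?T" using yS False S by (simp add: subspace_scale)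
    then have "?z \<bullet> (M *v ?z) \<le> l" using vmax l_def by blast
    then have "(1 / norm y)^2 * (y \<bullet> (M *v y)) \<le> l"
      by (simp add: matrix_vector_mult_scaleR power2_eq_square algebra_simps)
    moreover have "y \<bullet> y = (norm y)^2" by (simp add: power2_norm_eq_inner)
    moreover have "norm y > 0" using False by simp
    ultimately show ?thesis
      by (simp add: field_simps power2_eq_square)
  qed
  define w where "w = M *v v - l *\<^sub>R v"
  have wS: "w \<in> S" unfolding w_def using S vS inv by (simp add: subspace_diff subspace_scale)
  have vw: "v \<bullet> w = 0" unfolding w_def l_def using vv by (simp add: inner_diff_right)
  have wMv: "w \<bullet> (M *v v) = w \<bullet> w"
  proof -
    have "M *v v = w + l *\<^sub>R v" by (simp add: w_def)
    then show ?thesis using vw by (simp add: inner_add_right inner_commute)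
  qed
  have key: "2 * t * (w \<bullet> w) \<le> t^2 * (l * (w \<bullet> w) - w \<bullet> (M *v w))" for t
  proof -
    have "v + t *\<^sub>R w \<in> S" using S vS wS by (simp add: subspace_add subspace_scale)
    from bound[OF this]
    have "(v + t *\<^sub>R w) \<bullet> (M *v (v + t *\<^sub>R w)) \<le> l * ((v + t *\<^sub>R w) \<bullet> (v + t *\<^sub>R w))" .
    moreover have "(v + t *\<^sub>R w) \<bullet> (M *v (v + t *\<^sub>R w)) = l + 2 * t * (w \<bullet> w) + t^2 * (w \<bullet> (M *v w))"
    proof -
      have "v \<bullet> (M *v w) = w \<bullet> (M *v v)" using sym_dot[OF sym, of v w] by (simp add: inner_commute)
      then show ?thesis
        by (simp add: matrix_vector_mult_add_rdistrib matrix_vector_right_distrib matrix_vector_mult_scaleR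
          inner_add_left inner_add_right l_def wMv power2_eq_square algebra_simps)
    qed
    moreover have "(v + t *\<^sub>R w) \<bullet> (v + t *\<^sub>R w) = 1 + t^2 * (w \<bullet> w)"
      using vv vw by (simp add: inner_add_left inner_add_right inner_commute power2_eq_square algebra_simps)
    ultimately have "l + 2 * t * (w \<bullet> w) + t^2 * (w \<bullet> (M *v w)) \<le> l * (1 + t^2 * (w \<bullet> w))"
      by metis
    then show ?thesis by (simp add: algebra_simps)
  qed
  have "w \<bullet> w = 0"
  proof (rule ccontr)
    assume ne: "w \<bullet> w \<noteq> 0"
    then have pos: "w \<bullet> w > 0" by (simp add: order_less_le)
    define c where "c = l * (w \<bullet> w) - w \<bullet> (M *v w)"
    define t where "t = (w \<bullet> w) / (\<bar>c\<bar> + 1)"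
    have tpos: "t > 0" unfolding t_def using pos by simp
    have "2 * t * (w \<bullet> w) \<le> t^2 * c" using key[of t] c_def by simp
    then have "2 * (w \<bullet> w) \<le> t * c" using tpos by (simp add: power2_eq_square)
    also have "t * c \<le> t * \<bar>c\<bar>" using tpos by (simp add: mult_left_mono)
    also have "t * \<bar>c\<bar> < w \<bullet> w" unfolding t_def using pos
      by (simp add: field_simps)
    finally show False using pos by simp
  qed
  then have "M *v v = l *\<^sub>R v" unfolding w_def by simp
  then show ?thesis using vS nv by blast
qed

lemma spectral_sub:
  fixes M :: "real^'n^'n"
  assumes sym: "transpose M = M"
  shows "subspace S \<Longrightarrow> (\<forall>x\<in>S. M *v x \<in> S) \<Longrightarrow>
    \<exists>U. U \<subseteq> S \<and> finite U \<and> pairwise orthogonal U \<and>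
        (\<forall>u\<in>U. norm u = 1 \<and> (\<exists>l. M *v u = l *\<^sub>R u)) \<and> span U = S"
proof (induction "dim S" arbitrary: S rule: less_induct)
  case less
  show ?case
  proof (cases "S = {0}")
    case True
    then show ?thesis by (intro exI[of _ "{}"]) auto
  next
    case False
    obtain v l where vS: "v \<in> S" and nv: "norm v = 1" and Mv: "M *v v = l *\<^sub>R v"
      using eigvec_exists[OF sym less.prems(1) False] less.prems(2) by blast
    have vv: "v \<bullet> v = 1" using nv by (simp add: norm_eq_1)
    define S' where "S' = S \<inter> {x. v \<bullet> x = 0}"
    have sS': "subspace S'" unfolding S'_def
      by (simp add: less.prems(1) subspace_hyperplane subspace_inter)
    have invS': "\<forall>x\<in>S'. M *v x \<in> S'"
    proof
      fix x assume "x \<in> S'"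
      then have "x \<in> S" "v \<bullet> x = 0" by (auto simp: S'_def)
      moreover have "v \<bullet> (M *v x) = (M *v v) \<bullet> x" using sym_dot[OF sym] by simp
      ultimately show "M *v x \<in> S'" using less.prems(2) Mv by (auto simp: S'_def)
    qed
    have "v \<notin> S'" using vv by (simp add: S'_def)
    then have "S' \<subset> S" using vS unfolding S'_def by blast
    then have "dim S' < dim S"
      using dim_psubset sS' less.prems(1) by (metis span_eq_iff)
    from less.hyps[OF this sS' invS'] obtain U' where U':
      "U' \<subseteq> S'" "finite U'" "pairwise orthogonal U'"
      "\<forall>u\<in>U'. norm u = 1 \<and> (\<exists>l. M *v u = l *\<^sub>R u)" "span U' = S'" by blast
    have vU': "v \<notin> U'" using U'(1) vv by (auto simp: S'_def)
    have "pairwise orthogonal (insert v U')"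
      using U'(1,3) unfolding pairwise_insert
      by (auto simp: S'_def orthogonal_def inner_commute)
    moreover have "span (insert v U') = S"
    proof
      show "span (insert v U') \<subseteq> S"
        using U'(1) vS less.prems(1) by (metis S'_def inf.boundedE insert_subsetI span_minimal)
      show "S \<subseteq> span (insert v U')"
      proof
        fix x assume xS: "x \<in> S"
        have "x - (v \<bullet> x) *\<^sub>R v \<in> S'"
          using xS vS vv less.prems(1)
          by (simp add: S'_def subspace_diff subspace_scale inner_diff_right)
        then show "x \<in> span (insert v U')"
          using U'(5) span_breakdown_eq[of x v U'] by blast
      qed
    qed
    ultimately show ?thesis
      using U' vS nv Mv \<open>S' \<subset> S\<close> by (intro exI[of _ "insert v U'"]) auto
  qed
qed

definition ONB :: "(real^'n) set \<Rightarrow> bool" where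
  "ONB U \<longleftrightarrow> finite U \<and> pairwise orthogonal U \<and> (\<forall>u\<in>U. norm u = 1) \<and> span U = UNIV"

lemma spectral:
  fixes M :: "real^'n^'n"
  assumes sym: "transpose M = M"
  shows "\<exists>U a. ONB U \<and> (\<forall>u\<in>U. M *v u = a u *\<^sub>R u)"
proof -
  obtain U where U: "finite U" "pairwise orthogonal U"
        "\<forall>u\<in>U. norm u = 1 \<and> (\<exists>l. M *v u = l *\<^sub>R u)" "span U = UNIV"
    using spectral_sub[OF sym, of UNIV] by auto
  then show ?thesis unfolding ONB_def by metis
qed


definition outer :: "real^'n \<Rightarrow> real^'n \<Rightarrow> real^'n^'n" where
  "outer u v = (\<chi> i j. u$i * v$j)"

definition fc :: "(real^'n) set \<Rightarrow> (real^'n \<Rightarrow> real) \<Rightarrow> real^'n^'n" where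
  "fc U c = (\<Sum>u\<in>U. c u *\<^sub>R outer u u)"

lemma outer_mv: "outer u v *v x = (v \<bullet> x) *\<^sub>R u"
  by (simp add: vec_eq_iff outer_def matrix_vector_mult_def inner_vec_def sum_distrib_left sum_distrib_right mult.assoc mult.commute mult.left_commute)

lemma mv_sum_right: "A *v (\<Sum>u\<in>U. f u) = (\<Sum>u\<in>U. A *v (f u::real^'n))"
  by (induction U rule: infinite_finite_induct) (auto simp: matrix_vector_right_distrib)

lemma mv_sum: "(\<Sum>u\<in>U. A u) *v (x::real^'n) = (\<Sum>u\<in>U. A u *v x)"
  by (induction U rule: infinite_finite_induct) (auto simp: matrix_vector_mult_add_rdistrib)

lemma mv_scaleR: "(k *\<^sub>R A) *v (x::real^'n) = k *\<^sub>R (A *v x)"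
  by (simp add: vec_eq_iff matrix_vector_mult_def sum_distrib_left mult.assoc)

lemma fc_mv: "fc U c *v x = (\<Sum>u\<in>U. (c u * (u \<bullet> x)) *\<^sub>R u)"
  by (simp add: fc_def mv_sum mv_scaleR outer_mv)

lemma ONB_delta:
  assumes "ONB U" "w \<in> U"
  shows "w \<bullet> (\<Sum>u\<in>U. g u *\<^sub>R u) = g w"
proof -
  have fin: "finite U" and orth: "pairwise orthogonal U" and nrm: "\<forall>u\<in>U. norm u = 1"
    using assms(1) by (auto simp: ONB_def)
  have "w \<bullet> (\<Sum>u\<in>U. g u *\<^sub>R u) = (\<Sum>u\<in>U. g u * (w \<bullet> u))"
    by (simp add: inner_sum_right)
  also have "\<dots> = g w * (w \<bullet> w) + (\<Sum>u\<in>U - {w}. g u * (w \<bullet> u))"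
    using fin assms(2) by (simp add: sum.remove)
  also have "(\<Sum>u\<in>U - {w}. g u * (w \<bullet> u)) = 0"
    using orth assms(2) by (intro sum.neutral) (auto simp: pairwise_def orthogonal_def)
  also have "w \<bullet> w = 1" using nrm assms(2) by (simp add: norm_eq_1)
  finally show ?thesis by simp
qed

lemma ONB_expand:
  assumes "ONB U"
  shows "x = (\<Sum>u\<in>U. (u \<bullet> x) *\<^sub>R u)"
proof -
  define y where "y = x - (\<Sum>u\<in>U. (u \<bullet> x) *\<^sub>R u)"
  have "orthogonal y w" if "w \<in> U" for w
    using ONB_delta[OF assms that, of "\<lambda>u. u \<bullet> x"] that
    by (simp add: y_def orthogonal_def inner_diff_right inner_commute)
  then have "orthogonal y y"
    using orthogonal_to_span[of y U y] assms by (auto simp: ONB_def)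
  then show ?thesis by (simp add: y_def orthogonal_def)
qed

lemma ONB_ext:
  fixes X Y :: "real^'n^'n"
  assumes "ONB U" "\<And>u. u \<in> U \<Longrightarrow> X *v u = Y *v u"
  shows "X = Y"
proof -
  have "X *v x = Y *v x" for x
  proof -
    have "X *v x = X *v (\<Sum>u\<in>U. (u \<bullet> x) *\<^sub>R u)" using ONB_expand[OF assms(1)] by metis
    also have "\<dots> = (\<Sum>u\<in>U. (u \<bullet> x) *\<^sub>R (X *v u))"
      by (simp add: mv_sum_right matrix_vector_mult_scaleR)
    also have "\<dots> = (\<Sum>u\<in>U. (u \<bullet> x) *\<^sub>R (Y *v u))" using assms(2) by simp
    also have "\<dots> = Y *v (\<Sum>u\<in>U. (u \<bullet> x) *\<^sub>R u)"
      by (simp add: mv_sum_right matrix_vector_mult_scaleR)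
    also have "\<dots> = Y *v x" using ONB_expand[OF assms(1)] by metis
    finally show ?thesis .
  qed
  then show ?thesis by (simp add: matrix_eq)
qed

lemma fc_on:
  assumes "ONB U" "w \<in> U"
  shows "fc U c *v w = c w *\<^sub>R w"
proof -
  have fin: "finite U" and orth: "pairwise orthogonal U" and nrm: "\<forall>u\<in>U. norm u = 1"
    using assms(1) by (auto simp: ONB_def)
  have "fc U c *v w = (\<Sum>u\<in>U. (c u * (u \<bullet> w)) *\<^sub>R u)" by (rule fc_mv)
  also have "\<dots> = (c w * (w \<bullet> w)) *\<^sub>R w + (\<Sum>u\<in>U - {w}. (c u * (u \<bullet> w)) *\<^sub>R u)"
    using fin assms(2) by (simp add: sum.remove)
  also have "(\<Sum>u\<in>U - {w}. (c u * (u \<bullet> w)) *\<^sub>R u) = 0"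
    using orth assms(2) by (intro sum.neutral) (auto simp: pairwise_def orthogonal_def)
  also have "w \<bullet> w = 1" using nrm assms(2) by (simp add: norm_eq_1)
  finally show ?thesis by simp
qed

lemma eig_fc:
  assumes "ONB U" "\<forall>u\<in>U. M *v u = a u *\<^sub>R u"
  shows "M = fc U a"
  using assms by (intro ONB_ext[OF assms(1)]) (simp add: fc_on)

lemma fc_mult: assumes "ONB U" shows "fc U c ** fc U d = fc U (\<lambda>u. c u * d u)"
  by (rule ONB_ext[OF assms]) (simp add: fc_on[OF assms] matrix_vector_mul_assoc[symmetric] matrix_vector_mult_scaleR)

lemma fc_add: "fc U c + fc U d = fc U (\<lambda>u. c u + d u)"
  by (simp add: fc_def sum.distrib scaleR_add_left)

lemma fc_scale: "k *\<^sub>R fc U c = fc U (\<lambda>u. k * c u)"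
  by (simp add: fc_def scaleR_sum_right)

lemma fc_one: assumes "ONB U" shows "fc U (\<lambda>u. 1) = mat 1"
  by (rule ONB_ext[OF assms]) (simp add: fc_on[OF assms])

lemma fc_cong: "(\<And>u. u \<in> U \<Longrightarrow> c u = d u) \<Longrightarrow> fc U c = fc U d"
  by (simp add: fc_def)

lemma fc_sym: "transpose (fc U c) = fc U c"
  by (simp add: fc_def transpose_def outer_def vec_eq_iff sum_component mult.commute mult.left_commute)

lemma fc_spd:
  assumes "ONB U" "\<forall>u\<in>U. c u > 0"
  shows "fc U c \<in> spd"
proof -
  have fin: "finite U" using assms(1) by (auto simp: ONB_def)
  have "x \<bullet> (fc U c *v x) > 0" if "x \<noteq> 0" for x
  proof -
    have eq: "x \<bullet> (fc U c *v x) = (\<Sum>u\<in>U. c u * (u \<bullet> x)^2)"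
      by (simp add: fc_mv inner_sum_right power2_eq_square inner_commute mult.assoc)
    have "\<exists>u\<in>U. u \<bullet> x \<noteq> 0"
    proof (rule ccontr)
      assume "\<not> ?thesis"
      then have "x = 0" using ONB_expand[OF assms(1), of x] by simp
      then show False using that by simp
    qed
    then obtain w where w: "w \<in> U" "w \<bullet> x \<noteq> 0" by blast
    have "0 < c w * (w \<bullet> x)^2" using w assms(2) by simp
    also have "\<dots> \<le> (\<Sum>u\<in>U. c u * (u \<bullet> x)^2)"
      using fin w assms(2) by (intro member_le_sum) (auto intro: mult_nonneg_nonneg order.strict_implies_order)
    finally show ?thesis using eq by simp
  qed
  then show ?thesis using fc_sym unfolding spd_def by blast
qed

lemma fc_pow: assumes "ONB U" shows "mpow (fc U c) k = fc U (\<lambda>u. c u ^ k)"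
proof (induction k)
  case 0 then show ?case using fc_one[OF assms] by simp
next
  case (Suc k) then show ?case using fc_mult[OF assms] by simp
qed

lemma fc_exp: assumes "ONB U" shows "mexp (fc U c) = fc U (\<lambda>u. exp (c u))"
proof -
  have fin: "finite U" using assms by (auto simp: ONB_def)
  have "(\<lambda>k. (1 / fact k) *\<^sub>R mpow (fc U c) k) = (\<lambda>k. \<Sum>u\<in>U. (c u ^ k / fact k) *\<^sub>R outer u u)"
    unfolding fc_pow[OF assms] by (simp add: fc_def scaleR_sum_right)
  moreover have "(\<lambda>k. \<Sum>u\<in>U. (c u ^ k / fact k) *\<^sub>R outer u u) sums (\<Sum>u\<in>U. exp (c u) *\<^sub>R outer u u)"
  proof (rule sums_sum)
    fix u
    have "(\<lambda>k. c u ^ k / fact k) sums exp (c u)"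
      using exp_converges[of "c u"] by (simp add: divide_inverse mult.commute)
    then show "(\<lambda>k. (c u ^ k / fact k) *\<^sub>R outer u u) sums (exp (c u) *\<^sub>R outer u u)"
      by (rule sums_scaleR_left)
  qed
  ultimately show ?thesis unfolding mexp_def fc_def by (simp add: sums_iff)
qed

lemma fc_coeff:
  assumes "ONB U" "fc U p *v x = c *\<^sub>R x" "w \<in> U" "w \<bullet> x \<noteq> 0"
  shows "p w = c"
proof -
  have "w \<bullet> (fc U p *v x) = p w * (w \<bullet> x)"
    using ONB_delta[OF assms(1,3), of "\<lambda>u. p u * (u \<bullet> x)"] by (simp add: fc_mv)
  moreover have "w \<bullet> (c *\<^sub>R x) = c * (w \<bullet> x)" by simp
  ultimately show ?thesis using assms(2,4) by simp
qed

lemma fc_eigen: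
  assumes "ONB U" "\<forall>w\<in>U. w \<bullet> x \<noteq> 0 \<longrightarrow> q w = d"
  shows "fc U q *v x = d *\<^sub>R x"
proof -
  have "fc U q *v x = (\<Sum>u\<in>U. (q u * (u \<bullet> x)) *\<^sub>R u)" by (rule fc_mv)
  also have "\<dots> = (\<Sum>u\<in>U. (d * (u \<bullet> x)) *\<^sub>R u)"
    using assms(2) by (intro sum.cong) auto
  also have "\<dots> = d *\<^sub>R (\<Sum>u\<in>U. (u \<bullet> x) *\<^sub>R u)" by (simp add: scaleR_sum_right)
  also have "\<dots> = d *\<^sub>R x" using ONB_expand[OF assms(1)] by metis
  finally show ?thesis .
qed


lemma transpose_add': "transpose (A + B) = transpose A + transpose (B::real^'n^'m)"
  by (simp add: transpose_def vec_eq_iff)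

lemma transpose_minus': "transpose (- A) = - transpose (A::real^'n^'m)"
  by (simp add: transpose_def vec_eq_iff)

lemma transpose_zero': "transpose (0::real^'n^'m) = 0"
  by (simp add: transpose_def vec_eq_iff)

lemma subspace_sym: "subspace (sym_mats :: (real^'n^'n) set)"
  unfolding subspace_def sym_mats_def
  by (auto simp: transpose_add' transpose_scalar transpose_zero')

lemma sym_decomp:
  assumes "L \<in> sym_mats"
  shows "\<exists>U a. ONB U \<and> L = fc U a"
  using spectral[of L] assms eig_fc unfolding sym_mats_def by blast

lemma spd_decomp:
  assumes "C \<in> spd"
  shows "\<exists>U a. ONB U \<and> C = fc U a \<and> (\<forall>u\<in>U. a u > 0)"
proof -
  have sym: "transpose C = C" using assms by (simp add: spd_def)
  obtain U a where U: "ONB U" "\<forall>u\<in>U. C *v u = a u *\<^sub>R u" using spectral[OF sym] by blast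
  have "a u > 0" if "u \<in> U" for u
  proof -
    have n: "norm u = 1" using U(1) that by (auto simp: ONB_def)
    then have "u \<noteq> 0" by auto
    then have "u \<bullet> (C *v u) > 0" using assms by (simp add: spd_def)
    moreover have "u \<bullet> (C *v u) = a u" using U(2) that n by (simp add: norm_eq_1)
    ultimately show ?thesis by simp
  qed
  then show ?thesis using U eig_fc by blast
qed

lemma mexp_spd: "L \<in> sym_mats \<Longrightarrow> mexp L \<in> spd"
  using sym_decomp fc_exp fc_spd by fastforce

lemma mexp_symm: "L \<in> sym_mats \<Longrightarrow> transpose (mexp L) = mexp L"
  using mexp_spd spd_def by blast

lemma log_exists:
  assumes "C \<in> spd" shows "\<exists>L\<in>sym_mats. mexp L = C"
proof -
  obtain U a where U: "ONB U" "C = fc U a" "\<forall>u\<in>U. a u > 0" using spd_decomp[OF assms] by blast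
  have "mexp (fc U (\<lambda>u. ln (a u))) = C"
    using U by (simp add: fc_exp cong: fc_cong)
  moreover have "fc U (\<lambda>u. ln (a u)) \<in> sym_mats" by (simp add: sym_mats_def fc_sym)
  ultimately show ?thesis by blast
qed

lemma log_unique:
  assumes "L1 \<in> sym_mats" "L2 \<in> sym_mats" "mexp L1 = mexp L2"
  shows "L1 = L2"
proof -
  obtain U1 b1 where U1: "ONB U1" "L1 = fc U1 b1" using sym_decomp[OF assms(1)] by blast
  obtain U2 b2 where U2: "ONB U2" "L2 = fc U2 b2" using sym_decomp[OF assms(2)] by blast
  show ?thesis
  proof (rule ONB_ext[OF U2(1)])
    fix x assume x: "x \<in> U2"
    have "fc U1 (\<lambda>u. exp (b1 u)) = mexp L1" using U1 fc_exp[OF U1(1)] by simp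
    also have "\<dots> = mexp L2" by (rule assms(3))
    also have "\<dots> = fc U2 (\<lambda>u. exp (b2 u))" using U2 fc_exp[OF U2(1)] by simp
    finally have "fc U1 (\<lambda>u. exp (b1 u)) *v x = exp (b2 x) *\<^sub>R x"
      using fc_on[OF U2(1) x] by simp
    then have "\<forall>w\<in>U1. w \<bullet> x \<noteq> 0 \<longrightarrow> b1 w = b2 x"
      using fc_coeff[OF U1(1)] by fastforce
    then have "fc U1 b1 *v x = b2 x *\<^sub>R x" by (rule fc_eigen[OF U1(1)])
    then show "L1 *v x = L2 *v x" using U1(2) U2(2) fc_on[OF U2(1) x] by simp
  qed
qed

lemma mlog_props:
  assumes "C \<in> spd" shows "mlog C \<in> sym_mats" "mexp (mlog C) = C"
proof -
  have "\<exists>!L. L \<in> sym_mats \<and> mexp L = C" using log_exists[OF assms] log_unique by blast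
  then have "mlog C \<in> sym_mats \<and> mexp (mlog C) = C" unfolding mlog_def by (rule theI')
  then show "mlog C \<in> sym_mats" "mexp (mlog C) = C" by auto
qed

lemma mlog_mexp: "L \<in> sym_mats \<Longrightarrow> mlog (mexp L) = L"
  using mlog_props[OF mexp_spd] log_unique by blast

lemma mexp_add_scale:
  assumes "L \<in> sym_mats"
  shows "mexp (a *\<^sub>R L) ** mexp (b *\<^sub>R L) = mexp ((a + b) *\<^sub>R L)"
proof -
  obtain U c where U: "ONB U" "L = fc U c" using sym_decomp[OF assms] by blast
  show ?thesis using U
    by (simp add: fc_scale fc_exp fc_mult distrib_right exp_add)
qed

lemma mexp_zero: "mexp (0::real^'n^'n) = mat 1"
proof -
  have "(0::real^'n^'n) \<in> sym_mats" by (simp add: sym_mats_def transpose_def vec_eq_iff)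
  then obtain U c where U: "ONB U" "(0::real^'n^'n) = fc U c" using sym_decomp by blast
  have "mexp (0::real^'n^'n) = mexp (0 *\<^sub>R fc U c)" by simp
  also have "\<dots> = mexp (fc U (\<lambda>u. 0 * c u))" by (simp only: fc_scale)
  also have "\<dots> = fc U (\<lambda>u. exp (0 * c u))" by (rule fc_exp[OF U(1)])
  also have "\<dots> = fc U (\<lambda>u. 1)" by simp
  also have "\<dots> = mat 1" by (rule fc_one[OF U(1)])
  finally show ?thesis .
qed

lemma mexp_inv:
  assumes "L \<in> sym_mats"
  shows "mexp L ** mexp (- L) = mat 1" "mexp (- L) ** mexp L = mat 1"
  using mexp_add_scale[OF assms, of 1 "-1"] mexp_add_scale[OF assms, of "-1" 1]
  by (simp_all add: mexp_zero)

lemma matrix_inv_eq: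
  fixes A X :: "real^'n^'n"
  assumes "A ** X = mat 1" "X ** A = mat 1"
  shows "matrix_inv A = X"
proof -
  have ex: "\<exists>A'. A ** A' = mat 1 \<and> A' ** A = mat 1" using assms by blast
  define Y where "Y = matrix_inv A"
  have Y: "A ** Y = mat 1 \<and> Y ** A = mat 1"
    unfolding Y_def matrix_inv_def by (rule someI_ex[OF ex])
  have "Y = Y ** (A ** X)" using assms by simp
  also have "\<dots> = (Y ** A) ** X" by (simp add: matrix_mul_assoc)
  also have "\<dots> = X" using Y by simp
  finally show ?thesis by (simp add: Y_def)
qed

lemma minv_mexp: "L \<in> sym_mats \<Longrightarrow> matrix_inv (mexp L) = mexp (- L)"
  using mexp_inv matrix_inv_eq by blast

lemma msqrt_eq:
  assumes "C \<in> spd"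
  shows "msqrt C = mexp ((1/2) *\<^sub>R mlog C)"
proof -
  let ?L = "mlog C"
  have Ls: "?L \<in> sym_mats" using mlog_props[OF assms] by simp
  have hs: "(1/2) *\<^sub>R ?L \<in> sym_mats" using Ls by (simp add: sym_mats_def transpose_scalar)
  have sq: "mexp ((1/2) *\<^sub>R ?L) ** mexp ((1/2) *\<^sub>R ?L) = C"
    using mexp_add_scale[OF Ls, of "1/2" "1/2"] mlog_props[OF assms] by simp
  have uniq: "S = mexp ((1/2) *\<^sub>R ?L)" if S: "S \<in> spd" "S ** S = C" for S
  proof -
    let ?M = "mlog S"
    have Ms: "?M \<in> sym_mats" and eS: "mexp ?M = S" using mlog_props[OF S(1)] by auto
    have "mexp (2 *\<^sub>R ?M) = C"
      using mexp_add_scale[OF Ms, of 1 1] eS S(2) by simp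
    moreover have "2 *\<^sub>R ?M \<in> sym_mats" using Ms by (simp add: sym_mats_def transpose_scalar)
    ultimately have "2 *\<^sub>R ?M = ?L" using mlog_mexp by metis
    moreover have "?M = (1/2) *\<^sub>R (2 *\<^sub>R ?M)" by simp
    ultimately have "?M = (1/2) *\<^sub>R ?L" by metis
    then show ?thesis using eS by simp
  qed
  show ?thesis unfolding msqrt_def
  proof (rule the_equality)
    show "mexp ((1/2) *\<^sub>R ?L) \<in> spd \<and> mexp ((1/2) *\<^sub>R ?L) ** mexp ((1/2) *\<^sub>R ?L) = C"
      using mexp_spd[OF hs] sq by blast
    show "\<And>S. S \<in> spd \<and> S ** S = C \<Longrightarrow> S = mexp ((1/2) *\<^sub>R ?L)" using uniq by blast
  qed
qed

lemma congr_spd: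
  fixes S Q :: "real^'n^'n"
  assumes "transpose S = S" "S' ** S = mat 1" "Q \<in> spd"
  shows "S ** Q ** S \<in> spd"
proof -
  have tQ: "transpose Q = Q" using assms(3) by (simp add: spd_def)
  have "transpose (S ** Q ** S) = S ** Q ** S"
    using assms(1) tQ by (simp add: matrix_transpose_mul matrix_mul_assoc)
  moreover have "x \<bullet> ((S ** Q ** S) *v x) > 0" if "x \<noteq> 0" for x
  proof -
    have "S *v x \<noteq> 0"
    proof
      assume "S *v x = 0"
      then have "S' *v (S *v x) = 0" by simp
      then show False using assms(2) that by (simp add: matrix_vector_mul_assoc)
    qed
    then have "(S *v x) \<bullet> (Q *v (S *v x)) > 0" using assms(3) by (simp add: spd_def)
    also have "(S *v x) \<bullet> (Q *v (S *v x)) = x \<bullet> (S *v (Q *v (S *v x)))"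
      using sym_dot[OF assms(1)] by simp
    finally show ?thesis by (simp add: matrix_vector_mul_assoc matrix_mul_assoc)
  qed
  ultimately show ?thesis by (simp add: spd_def)
qed

lemma congr_sym:
  fixes S V :: "real^'n^'n"
  assumes "transpose S = S" "V \<in> sym_mats"
  shows "S ** V ** S \<in> sym_mats"
  using assms by (simp add: sym_mats_def matrix_transpose_mul matrix_mul_assoc)


lemma entry_mult_bound:
  fixes A B :: "real^'n^'n"
  assumes "\<And>i j. \<bar>A$i$j\<bar> \<le> a" "\<And>i j. \<bar>B$i$j\<bar> \<le> b"
  shows "\<bar>(A ** B)$i$j\<bar> \<le> real CARD('n) * a * b"
proof -
  have "\<bar>(A ** B)$i$j\<bar> = \<bar>\<Sum>k\<in>UNIV. A$i$k * B$k$j\<bar>" by (simp add: matrix_matrix_mult_def)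
  also have "\<dots> \<le> (\<Sum>k\<in>UNIV. \<bar>A$i$k\<bar> * \<bar>B$k$j\<bar>)" by (rule order_trans[OF sum_abs]) (simp add: abs_mult)
  also have "\<dots> \<le> (\<Sum>k\<in>(UNIV::'n set). a * b)"
    using assms(1)[of i i] by (intro sum_mono mult_mono assms) (auto intro: order_trans[OF abs_ge_zero])
  finally show ?thesis by simp
qed

lemma mpow_bound:
  fixes M :: "real^'n^'n"
  assumes "\<And>i j. \<bar>M$i$j\<bar> \<le> r" "r \<ge> 0"
  shows "\<bar>(mpow M k)$i$j\<bar> \<le> (real CARD('n) * r)^k"
proof (induction k arbitrary: i j)
  case 0 then show ?case by (simp add: mat_def)
next
  case (Suc k)
  have "\<bar>(M ** mpow M k)$i$j\<bar> \<le> real CARD('n) * r * (real CARD('n) * r)^k"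
    by (rule entry_mult_bound[OF assms(1) Suc.IH])
  then show ?case by (simp add: algebra_simps)
qed

lemma norm_entry_bound:
  fixes X :: "real^'n^'n"
  assumes "\<And>i j. \<bar>X$i$j\<bar> \<le> c"
  shows "norm X \<le> real CARD('n) * real CARD('n) * c"
proof -
  have "norm X \<le> (\<Sum>i\<in>UNIV. norm (X$i))"
    unfolding norm_vec_def by (rule L2_set_le_sum) auto
  also have "\<dots> \<le> (\<Sum>i\<in>(UNIV::'n set). \<Sum>j\<in>(UNIV::'n set). \<bar>X$i$j\<bar>)"
    by (intro sum_mono norm_le_l1_cart)
  also have "\<dots> \<le> (\<Sum>i\<in>(UNIV::'n set). \<Sum>j\<in>(UNIV::'n set). c)"
    by (intro sum_mono assms)
  finally show ?thesis by simp
qed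

lemma entry_le_norm: "\<bar>(M::real^'n^'n)$i$j\<bar> \<le> norm M"
  using component_le_norm_cart[of "M$i" j] Finite_Cartesian_Product.norm_nth_le[of M i] by linarith

lemma cont_mpow: "continuous_on S (\<lambda>M::real^'n^'n. mpow M k)"
  by (induction k) (auto intro!: continuous_intros)

lemma cont_mexp_ball: "continuous_on (ball 0 r) (mexp :: real^'n^'n \<Rightarrow> _)"
proof (cases "r > 0")
  case False then show ?thesis by (simp add: ball_empty)
next
  case True
  let ?n = "real CARD('n)"
  define Mb where "Mb = (\<lambda>k::nat. ?n * ?n * ((?n * r)^k / fact k))"
  have bnd: "norm ((1 / fact k) *\<^sub>R mpow M k) \<le> Mb k" if "M \<in> ball (0::real^'n^'n) r" for k M
  proof -
    have h: "\<bar>M$i$j\<bar> \<le> r" for i j using entry_le_norm[of M i j] that by simp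
    have "\<bar>(mpow M k)$i$j\<bar> \<le> (?n * r)^k" for i j using mpow_bound[OF h] True by simp
    then have "\<bar>((1 / fact k) *\<^sub>R mpow M k)$i$j\<bar> \<le> (?n * r)^k / fact k" for i j
      by (simp add: divide_right_mono)
    then show ?thesis unfolding Mb_def by (rule norm_entry_bound)
  qed
  have sm: "summable Mb"
    unfolding Mb_def
    using exp_converges[of "?n * r"] by (intro summable_mult) (simp add: sums_iff divide_inverse mult.commute)
  have ul: "uniform_limit (ball (0::real^'n^'n) r) (\<lambda>n M. \<Sum>k<n. (1 / fact k) *\<^sub>R mpow M k)
        (\<lambda>M. \<Sum>k. (1 / fact k) *\<^sub>R mpow M k) sequentially"
  proof (rule Weierstrass_m_test[where M=Mb])
    fix n and M :: "real^'n^'n" assume "M \<in> ball 0 r"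
    then show "norm ((1 / fact n) *\<^sub>R mpow M n) \<le> Mb n" by (rule bnd)
  next
    show "summable Mb" by (rule sm)
  qed
  show ?thesis
    unfolding mexp_def[abs_def]
    by (rule uniform_limit_theorem[OF _ ul]) (auto intro!: always_eventually continuous_on_sum continuous_on_scaleR continuous_on_const cont_mpow)
qed

lemma cont_mexp: "continuous_on S (mexp :: real^'n^'n \<Rightarrow> _)"
proof -
  have "isCont mexp M" for M :: "real^'n^'n"
  proof -
    have "M \<in> ball 0 (norm M + 1)" by simp
    then show ?thesis using cont_mexp_ball[of "norm M + 1"]
      by (meson continuous_on_eq_continuous_at open_ball)
  qed
  then show ?thesis by (simp add: continuous_at_imp_continuous_on)
qed

lemma mexp_image: "mexp ` sym_mats = (spd :: (real^'n^'n) set)"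
proof
  show "mexp ` sym_mats \<subseteq> (spd :: (real^'n^'n) set)" using mexp_spd by auto
  show "(spd :: (real^'n^'n) set) \<subseteq> mexp ` sym_mats"
  proof
    fix C :: "real^'n^'n" assume "C \<in> spd"
    then show "C \<in> mexp ` sym_mats" using mlog_props[of C] by (metis image_eqI)
  qed
qed

lemma cont_mlog: "continuous_on (spd :: (real^'n^'n) set) mlog"
proof (rule continuous_on_inverse_open_map[OF cont_mexp mexp_image])
  show "\<And>x. x \<in> sym_mats \<Longrightarrow> mlog (mexp x) = x" by (rule mlog_mexp)
  fix U :: "(real^'n^'n) set"
  assume U: "openin (top_of_set sym_mats) U"
  then have Usub: "U \<subseteq> sym_mats" by (rule openin_imp_subset)
  have "openin (top_of_set sym_mats) (mexp ` U)"
  proof (rule invariance_of_domain_subspaces[OF U subspace_sym subspace_sym order_refl cont_mexp])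
    show "mexp \<in> U \<rightarrow> sym_mats" using Usub mexp_symm by (auto simp: sym_mats_def)
    show "inj_on mexp U" using Usub log_unique by (auto simp: inj_on_def)
  qed
  moreover have "mexp ` U \<subseteq> spd" using Usub mexp_spd by auto
  moreover have "(spd::(real^'n^'n) set) \<subseteq> sym_mats" by (auto simp: spd_def sym_mats_def)
  ultimately show "openin (top_of_set spd) (mexp ` U)" by (rule openin_subset_trans)
qed


definition hs :: "real^'n^'n \<Rightarrow> real^'n^'n" where "hs A = (1/2) *\<^sub>R mlog A"

lemma hs_sym: "A \<in> spd \<Longrightarrow> hs A \<in> sym_mats"
  using mlog_props(1) by (simp add: hs_def sym_mats_def transpose_scalar)

lemma hs_neg_sym: "A \<in> spd \<Longrightarrow> - hs A \<in> sym_mats"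
  using hs_sym by (simp add: sym_mats_def transpose_minus')

lemma msqrt_hs: "A \<in> spd \<Longrightarrow> msqrt A = mexp (hs A)"
  by (simp add: msqrt_eq hs_def)

lemma minv_hs: "A \<in> spd \<Longrightarrow> matrix_inv (msqrt A) = mexp (- hs A)"
  by (simp add: msqrt_hs minv_mexp hs_sym)

lemma hs_sq: "A \<in> spd \<Longrightarrow> mexp (hs A) ** mexp (hs A) = A"
  using mexp_add_scale[OF mlog_props(1), of A "1/2" "1/2"] mlog_props(2)[of A] by (simp add: hs_def)

lemma hs_inv: "A \<in> spd \<Longrightarrow> mexp (hs A) ** mexp (- hs A) = mat 1"
  "A \<in> spd \<Longrightarrow> mexp (- hs A) ** mexp (hs A) = mat 1"
  using mexp_inv[OF hs_sym] by auto

lemma hs_symm: "A \<in> spd \<Longrightarrow> transpose (mexp (hs A)) = mexp (hs A)"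
  "A \<in> spd \<Longrightarrow> transpose (mexp (- hs A)) = mexp (- hs A)"
  using mexp_symm hs_sym hs_neg_sym by auto

lemma inner_spd: "A \<in> spd \<Longrightarrow> C \<in> spd \<Longrightarrow> mexp (- hs A) ** C ** mexp (- hs A) \<in> spd"
  by (rule congr_spd[OF hs_symm(2) hs_inv(1)])

lemma RLog_eq: assumes A: "A \<in> spd" shows "RLog A C = mexp (hs A) ** mlog (mexp (- hs A) ** C ** mexp (- hs A)) ** mexp (hs A)"
  unfolding RLog_def minv_hs[OF A] unfolding msqrt_hs[OF A] by (rule refl)

lemma RExp_eq: assumes A: "A \<in> spd" shows "RExp A V = mexp (hs A) ** mexp (mexp (- hs A) ** V ** mexp (- hs A)) ** mexp (hs A)"
  unfolding RExp_def minv_hs[OF A] unfolding msqrt_hs[OF A] by (rule refl)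

lemma RLog_sym: "A \<in> spd \<Longrightarrow> C \<in> spd \<Longrightarrow> RLog A C \<in> sym_mats"
  by (simp add: RLog_eq congr_sym hs_symm mlog_props inner_spd)

lemma RExp_spd: "A \<in> spd \<Longrightarrow> V \<in> sym_mats \<Longrightarrow> RExp A V \<in> spd"
  unfolding RExp_eq
  by (intro congr_spd[OF hs_symm(1) hs_inv(2)] mexp_spd congr_sym hs_symm(2)) auto

lemma RExp_RLog: "A \<in> spd \<Longrightarrow> C \<in> spd \<Longrightarrow> RExp A (RLog A C) = C"
proof -
  assume A: "A \<in> spd" and C: "C \<in> spd"
  let ?s = "mexp (hs A)" and ?i = "mexp (- hs A)"
  let ?X = "?i ** C ** ?i"
  have X: "?X \<in> spd" using inner_spd[OF A C] .
  have "?i ** (?s ** mlog ?X ** ?s) ** ?i = (?i ** ?s) ** mlog ?X ** (?s ** ?i)"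
    by (simp add: matrix_mul_assoc)
  also have "\<dots> = mlog ?X" using hs_inv[OF A] by simp
  finally have e1: "?i ** (?s ** mlog ?X ** ?s) ** ?i = mlog ?X" .
  have "RExp A (RLog A C) = ?s ** mexp (mlog ?X) ** ?s"
    using A by (simp add: RExp_eq RLog_eq e1)
  also have "\<dots> = ?s ** ?X ** ?s" using mlog_props(2)[OF X] by simp
  also have "\<dots> = (?s ** ?i) ** C ** (?i ** ?s)" by (simp add: matrix_mul_assoc)
  also have "\<dots> = C" using hs_inv[OF A] by simp
  finally show ?thesis .
qed

lemma cont_hs: "continuous_on spd (\<lambda>A::real^'n^'n. hs A)"
  unfolding hs_def by (intro continuous_intros cont_mlog)

lemma cont_RLog: "A \<in> spd \<Longrightarrow> continuous_on spd (RLog A)"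
proof -
  assume A: "A \<in> spd"
  have "continuous_on spd (\<lambda>C. mexp (- hs A) ** C ** mexp (- hs A))"
    by (intro continuous_intros)
  then have "continuous_on spd (\<lambda>C. mlog (mexp (- hs A) ** C ** mexp (- hs A)))"
    using inner_spd[OF A] by (intro continuous_on_compose2[OF cont_mlog]) auto
  then have "continuous_on spd (\<lambda>C. mexp (hs A) ** mlog (mexp (- hs A) ** C ** mexp (- hs A)) ** mexp (hs A))"
    by (intro continuous_intros)
  then show ?thesis by (rule continuous_on_eq) (use A in \<open>simp add: RLog_eq\<close>)
qed

lemma cont_RExp: "A \<in> spd \<Longrightarrow> continuous_on S (RExp A)"
proof -
  assume A: "A \<in> spd"
  have "continuous_on S (\<lambda>V. mexp (hs A) ** mexp (mexp (- hs A) ** V ** mexp (- hs A)) ** mexp (hs A))"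
    by (intro continuous_intros continuous_on_compose2[OF cont_mexp]) auto
  then show ?thesis by (rule continuous_on_eq) (use A in \<open>simp add: RExp_eq\<close>)
qed

lemma ai_dist_eq: "P \<in> spd \<Longrightarrow> ai_dist P Q = norm (mlog (mexp (- hs P) ** Q ** mexp (- hs P)))"
  by (simp add: ai_dist_def minv_hs)

lemma cont_ai_dist:
  assumes "continuous_on S f" "continuous_on S g" "f ` S \<subseteq> spd" "g ` S \<subseteq> spd"
  shows "continuous_on S (\<lambda>x. ai_dist (f x) (g x))"
proof -
  have c1: "continuous_on S (\<lambda>x. hs (f x))"
    using assms by (intro continuous_on_compose2[OF cont_hs assms(1)]) auto
  have c2: "continuous_on S (\<lambda>x. mexp (- hs (f x)) ** g x ** mexp (- hs (f x)))"
    by (intro continuous_intros continuous_on_compose2[OF cont_mexp] c1 assms(2)) auto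
  have c3: "continuous_on S (\<lambda>x. mlog (mexp (- hs (f x)) ** g x ** mexp (- hs (f x))))"
    using assms(3,4) inner_spd by (intro continuous_on_compose2[OF cont_mlog c2]) blast
  have "continuous_on S (\<lambda>x. norm (mlog (mexp (- hs (f x)) ** g x ** mexp (- hs (f x)))))"
    by (intro continuous_intros c3)
  then show ?thesis
    by (rule continuous_on_eq) (use assms(3) in \<open>simp add: ai_dist_eq image_subset_iff\<close>)
qed

lemma ai_dist_self: "P \<in> spd \<Longrightarrow> ai_dist P P = 0"
proof -
  assume P: "P \<in> spd"
  have "mexp (- hs P) ** P ** mexp (- hs P) = mexp (- hs P) ** (mexp (hs P) ** mexp (hs P)) ** mexp (- hs P)"
    using hs_sq[OF P] by simp
  also have "\<dots> = (mexp (- hs P) ** mexp (hs P)) ** (mexp (hs P) ** mexp (- hs P))"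
    by (simp add: matrix_mul_assoc)
  also have "\<dots> = mat 1" using hs_inv[OF P] by simp
  finally have "mexp (- hs P) ** P ** mexp (- hs P) = mexp 0" by (simp add: mexp_zero)
  moreover have "(0::real^'n^'n) \<in> sym_mats" by (simp add: sym_mats_def transpose_zero')
  ultimately show ?thesis using P mlog_mexp[of 0] by (simp add: ai_dist_eq)
qed


lemma unif_small:
  fixes G :: "'a::euclidean_space \<times> 'a \<Rightarrow> real"
  assumes cG: "continuous_on UNIV G" and G0: "\<And>u. u \<in> C \<Longrightarrow> G (u, u) = 0"
    and C: "compact C" and e: "e > 0"
  shows "\<exists>d>0. \<forall>u\<in>C. \<forall>v. dist v u < d \<longrightarrow> G (u, v) < e"
proof -
  define T where "T = (\<lambda>p. (fst p, fst p + snd p)) ` (C \<times> cball (0::'a) 1)"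
  have "compact T" unfolding T_def
    by (intro compact_continuous_image compact_Times C compact_cball) (intro continuous_intros)
  then have "uniformly_continuous_on T G"
    using cG by (intro compact_uniformly_continuous) (auto intro: continuous_on_subset)
  then obtain d0 where d0: "d0 > 0" "\<And>x x'. x \<in> T \<Longrightarrow> x' \<in> T \<Longrightarrow> dist x' x < d0 \<Longrightarrow> dist (G x') (G x) < e"
    unfolding uniformly_continuous_on_def using e by metis
  show ?thesis
  proof (intro exI[of _ "min d0 1"] conjI ballI allI impI)
    show "min d0 1 > 0" using d0 by simp
    fix u v assume u: "u \<in> C" and dv: "dist v u < min d0 1"
    have p: "(u, u) \<in> T" unfolding T_def using u by (auto intro!: image_eqI[of _ _ "(u, 0)"])
    have q: "(u, v) \<in> T" unfolding T_def using u dv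
      by (auto intro!: image_eqI[of _ _ "(u, v - u)"] simp: dist_norm norm_minus_commute)
    have "dist (u, v) (u, u) < d0" using dv by (simp add: dist_Pair_Pair)
    then have "dist (G (u, v)) (G (u, u)) < e" using d0(2)[OF p q] by simp
    then show "G (u, v) < e" using G0[OF u] by (simp add: dist_real_def)
  qed
qed

lemma lin_left_inv:
  fixes k :: "'a::euclidean_space \<Rightarrow> 'b::euclidean_space"
  assumes "linear k" "inj k"
  obtains l where "linear l" "\<And>x. l (k x) = x" "\<And>y. y \<in> range k \<Longrightarrow> inv k y = l y"
proof -
  obtain l where l: "linear l" "l \<circ> k = id" using linear_injective_left_inverse[OF assms] by blast
  then have lk: "\<And>x. l (k x) = x" by (metis comp_apply id_apply)
  have "inv k y = l y" if "y \<in> range k" for y using that lk assms(2) by auto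
  then show ?thesis using that l(1) lk by blast
qed

theorem part1:
  fixes \<kappa>d :: "real^'m \<Rightarrow> real^'d^'d"
    and \<kappa>D :: "real^'n \<Rightarrow> real^'D^'D"
    and A :: "real^'d^'d" and B :: "real^'D^'D"
    and F :: "(real^'m \<Rightarrow> real^'n) set"
  assumes "linear \<kappa>d" and "inj \<kappa>d" and rd: "range \<kappa>d = sym_mats"
    and "linear \<kappa>D" and "inj \<kappa>D" and rD: "range \<kappa>D = sym_mats"
    and A: "A \<in> spd" and B: "B \<in> spd"
    and dense: "ucc_dense UNIV UNIV dist F"
  shows "ucc_dense spd spd ai_dist ((\<lambda>f. RExp B \<circ> \<kappa>D \<circ> f \<circ> inv \<kappa>d \<circ> RLog A) ` F)"
proof -
  obtain ld where ld: "linear ld" "\<And>x. ld (\<kappa>d x) = x" "\<And>y. y \<in> range \<kappa>d \<Longrightarrow> inv \<kappa>d y = ld y"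
    using lin_left_inv[OF assms(1,2)] by blast
  obtain lD where lD: "linear lD" "\<And>x. lD (\<kappa>D x) = x"
    using lin_left_inv[OF assms(4,5)] by blast
  have kd_cont: "continuous_on S \<kappa>d" for S by (metis assms(1) linear_conv_bounded_linear linear_continuous_on)
  have kD_cont: "continuous_on S \<kappa>D" for S by (metis assms(4) linear_conv_bounded_linear linear_continuous_on)
  have ld_cont: "continuous_on S ld" for S by (metis ld(1) linear_conv_bounded_linear linear_continuous_on)
  have lD_cont: "continuous_on S lD" for S by (metis lD(1) linear_conv_bounded_linear linear_continuous_on)
  have kd_ld: "\<kappa>d (ld y) = y" if "y \<in> sym_mats" for y
    using that rd ld(2) by (metis rangeE)
  have kD_lD: "\<kappa>D (lD y) = y" if "y \<in> sym_mats" for y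
    using that rD lD(2) by (metis rangeE)
  define \<Psi> where "\<Psi> = (\<lambda>x. ld (RLog A x))"
  define \<Psi>i where "\<Psi>i = (\<lambda>z. RExp A (\<kappa>d z))"
  define \<Phi> where "\<Phi> = (\<lambda>v. RExp B (\<kappa>D v))"
  define \<Phi>' where "\<Phi>' = (\<lambda>y. lD (RLog B y))"
  have \<Psi>_cont: "continuous_on spd \<Psi>" unfolding \<Psi>_def
    by (rule continuous_on_compose2[OF ld_cont cont_RLog[OF A]]) auto
  have \<Psi>i_cont: "continuous_on S \<Psi>i" for S unfolding \<Psi>i_def
    by (rule continuous_on_compose2[OF cont_RExp[OF A] kd_cont]) auto
  have \<Psi>i_spd: "\<Psi>i z \<in> spd" for z unfolding \<Psi>i_def using rd by (auto intro!: RExp_spd[OF A])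
  have \<Psi>i\<Psi>: "\<Psi>i (\<Psi> x) = x" if "x \<in> spd" for x
    unfolding \<Psi>i_def \<Psi>_def using that by (simp add: kd_ld RLog_sym[OF A] RExp_RLog[OF A])
  have \<Phi>_cont: "continuous_on S \<Phi>" for S unfolding \<Phi>_def
    by (rule continuous_on_compose2[OF cont_RExp[OF B] kD_cont]) auto
  have \<Phi>_spd: "\<Phi> v \<in> spd" for v unfolding \<Phi>_def using rD by (auto intro!: RExp_spd[OF B])
  have \<Phi>'_cont: "continuous_on spd \<Phi>'" unfolding \<Phi>'_def
    by (rule continuous_on_compose2[OF lD_cont cont_RLog[OF B]]) auto
  have \<Phi>\<Phi>': "\<Phi> (\<Phi>' y) = y" if "y \<in> spd" for y
    unfolding \<Phi>_def \<Phi>'_def using that by (simp add: kD_lD RLog_sym[OF B] RExp_RLog[OF B])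
  have comp_eq: "(RExp B \<circ> \<kappa>D \<circ> f \<circ> inv \<kappa>d \<circ> RLog A) x = \<Phi> (f (\<Psi> x))" if "x \<in> spd" for f x
    unfolding \<Phi>_def \<Psi>_def using that rd by (simp add: ld(3) RLog_sym[OF A])
  show ?thesis
    unfolding ucc_dense_def
  proof (intro allI impI, elim conjE)
    fix g :: "real^'d^'d \<Rightarrow> real^'D^'D" and K :: "(real^'d^'d) set" and e :: real
    assume gc: "continuous_on spd g" and gs: "g ` spd \<subseteq> spd" and K: "compact K" and Ks: "K \<subseteq> spd" and e: "e > 0"
    define h where "h = (\<lambda>z. \<Phi>' (g (\<Psi>i z)))"
    have hc: "continuous_on UNIV h" unfolding h_def
    proof (rule continuous_on_compose2[OF \<Phi>'_cont continuous_on_compose2[OF gc \<Psi>i_cont]])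
      show "range \<Psi>i \<subseteq> spd" using \<Psi>i_spd by auto
      show "(\<lambda>x. g (\<Psi>i x)) ` UNIV \<subseteq> spd" using \<Psi>i_spd gs by auto
    qed
    define C where "C = (\<lambda>x. \<Phi>' (g x)) ` K"
    have Cc: "compact C" unfolding C_def
    proof (rule compact_continuous_image[OF _ K])
      show "continuous_on K (\<lambda>x. \<Phi>' (g x))"
        using Ks gs by (intro continuous_on_compose2[OF \<Phi>'_cont continuous_on_subset[OF gc Ks]]) auto
    qed
    define G where "G = (\<lambda>p. ai_dist (\<Phi> (snd p)) (\<Phi> (fst p)))"
    have Gc: "continuous_on UNIV G" unfolding G_def
      by (intro cont_ai_dist continuous_on_compose2[OF \<Phi>_cont] continuous_intros) (auto simp: \<Phi>_spd)
    have G0: "G (u, u) = 0" for u unfolding G_def by (simp add: ai_dist_self \<Phi>_spd)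
    obtain d where d: "d > 0" "\<And>u v. u \<in> C \<Longrightarrow> dist v u < d \<Longrightarrow> G (u, v) < e"
      using unif_small[OF Gc G0 Cc e] by blast
    have K'c: "compact (\<Psi> ` K)" by (rule compact_continuous_image[OF continuous_on_subset[OF \<Psi>_cont Ks] K])
    have "\<exists>f\<in>F. \<forall>z\<in>\<Psi> ` K. dist (f z) (h z) < d"
      using dense K'c d(1) hc unfolding ucc_dense_def by blast
    then obtain f where f: "f \<in> F" "\<And>z. z \<in> \<Psi> ` K \<Longrightarrow> dist (f z) (h z) < d" by blast
    show "\<exists>f'\<in>(\<lambda>f. RExp B \<circ> \<kappa>D \<circ> f \<circ> inv \<kappa>d \<circ> RLog A) ` F. \<forall>x\<in>K. ai_dist (f' x) (g x) < e"
    proof (intro bexI[of _ "RExp B \<circ> \<kappa>D \<circ> f \<circ> inv \<kappa>d \<circ> RLog A"] ballI)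
      show "RExp B \<circ> \<kappa>D \<circ> f \<circ> inv \<kappa>d \<circ> RLog A \<in> (\<lambda>f. RExp B \<circ> \<kappa>D \<circ> f \<circ> inv \<kappa>d \<circ> RLog A) ` F"
        using f(1) by blast
      fix x assume x: "x \<in> K"
      have xs: "x \<in> spd" using x Ks by auto
      have hx: "h (\<Psi> x) = \<Phi>' (g x)" unfolding h_def using \<Psi>i\<Psi>[OF xs] by simp
      have "dist (f (\<Psi> x)) (\<Phi>' (g x)) < d" using f(2)[of "\<Psi> x"] x hx by simp
      moreover have "\<Phi>' (g x) \<in> C" unfolding C_def using x by simp
      ultimately have "G (\<Phi>' (g x), f (\<Psi> x)) < e" using d(2) by blast
      then have "ai_dist (\<Phi> (f (\<Psi> x))) (\<Phi> (\<Phi>' (g x))) < e" by (simp add: G_def)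
      moreover have "\<Phi> (\<Phi>' (g x)) = g x" using \<Phi>\<Phi>' gs xs by auto
      ultimately show "ai_dist ((RExp B \<circ> \<kappa>D \<circ> f \<circ> inv \<kappa>d \<circ> RLog A) x) (g x) < e"
        using comp_eq[OF xs] by simp
    qed
  qed
qed


definition comb :: "(real \<Rightarrow> real) \<Rightarrow> (real \<times> real \<times> real) list \<Rightarrow> real \<Rightarrow> real" where
  "comb \<sigma> xs t = (\<Sum>(c,w,b)\<leftarrow>xs. c * \<sigma> (w * t + b))"

definition Nset :: "(real \<Rightarrow> real) \<Rightarrow> (real \<Rightarrow> real) set" where
  "Nset \<sigma> = {f. \<forall>R e. e > 0 \<longrightarrow> (\<exists>xs. \<forall>t\<in>{-R..R}. \<bar>f t - comb \<sigma> xs t\<bar> < e)}"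

lemma comb_Nil[simp]: "comb \<sigma> [] t = 0" by (simp add: comb_def)

lemma comb_append: "comb \<sigma> (xs @ ys) t = comb \<sigma> xs t + comb \<sigma> ys t"
  by (simp add: comb_def)

lemma comb_scale: "comb \<sigma> (map (\<lambda>(c,w,b). (k*c,w,b)) xs) t = k * comb \<sigma> xs t"
  by (induction xs) (auto simp: comb_def algebra_simps)

lemma comb_affine: "comb \<sigma> (map (\<lambda>(c,w',b'). (c, w'*w, w'*b+b')) xs) t = comb \<sigma> xs (w*t+b)"
  by (induction xs) (auto simp: comb_def algebra_simps)

lemma NsetI: "(\<And>R e. e > 0 \<Longrightarrow> \<exists>xs. \<forall>t\<in>{-R..R}. \<bar>f t - comb \<sigma> xs t\<bar> < e) \<Longrightarrow> f \<in> Nset \<sigma>"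
  by (simp add: Nset_def)

lemma NsetD: "f \<in> Nset \<sigma> \<Longrightarrow> e > 0 \<Longrightarrow> \<exists>xs. \<forall>t\<in>{-R..R}. \<bar>f t - comb \<sigma> xs t\<bar> < e"
  by (simp add: Nset_def)

lemma N_sigma: "\<sigma> \<in> Nset \<sigma>"
  by (rule NsetI, rule exI[of _ "[(1,1,0)]"]) (simp add: comb_def)

lemma N_zero: "(\<lambda>t. 0) \<in> Nset \<sigma>"
  by (rule NsetI, rule exI[of _ "[]"]) simp

lemma N_add: assumes "f \<in> Nset \<sigma>" "g \<in> Nset \<sigma>" shows "(\<lambda>t. f t + g t) \<in> Nset \<sigma>"
proof (rule NsetI)
  fix R e :: real assume e: "e > 0"
  obtain xs where xs: "\<forall>t\<in>{-R..R}. \<bar>f t - comb \<sigma> xs t\<bar> < e/2" using NsetD[OF assms(1), of "e/2" R] e by auto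
  obtain ys where ys: "\<forall>t\<in>{-R..R}. \<bar>g t - comb \<sigma> ys t\<bar> < e/2" using NsetD[OF assms(2), of "e/2" R] e by auto
  show "\<exists>xs. \<forall>t\<in>{-R..R}. \<bar>f t + g t - comb \<sigma> xs t\<bar> < e"
  proof (intro exI[of _ "xs @ ys"] ballI)
    fix t assume "t \<in> {-R..R}"
    then have "\<bar>f t - comb \<sigma> xs t\<bar> < e/2" "\<bar>g t - comb \<sigma> ys t\<bar> < e/2" using xs ys by auto
    moreover have "\<bar>f t + g t - comb \<sigma> (xs @ ys) t\<bar> \<le> \<bar>f t - comb \<sigma> xs t\<bar> + \<bar>g t - comb \<sigma> ys t\<bar>"
      unfolding comb_append by (rule order_trans[OF _ abs_triangle_ineq]) simp
    ultimately show "\<bar>f t + g t - comb \<sigma> (xs @ ys) t\<bar> < e" by linarith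
  qed
qed

lemma N_scale: assumes "f \<in> Nset \<sigma>" shows "(\<lambda>t. k * f t) \<in> Nset \<sigma>"
proof (rule NsetI)
  fix R e :: real assume e: "e > 0"
  obtain xs where xs: "\<forall>t\<in>{-R..R}. \<bar>f t - comb \<sigma> xs t\<bar> < e / (\<bar>k\<bar> + 1)"
    using NsetD[OF assms(1), of "e / (\<bar>k\<bar> + 1)" R] e by auto
  show "\<exists>xs. \<forall>t\<in>{-R..R}. \<bar>k * f t - comb \<sigma> xs t\<bar> < e"
  proof (intro exI[of _ "map (\<lambda>(c,w,b). (k*c,w,b)) xs"] ballI)
    fix t assume "t \<in> {-R..R}"
    then have d: "\<bar>f t - comb \<sigma> xs t\<bar> < e / (\<bar>k\<bar> + 1)" using xs by auto
    have "\<bar>k * f t - k * comb \<sigma> xs t\<bar> = \<bar>k\<bar> * \<bar>f t - comb \<sigma> xs t\<bar>" by (simp add: abs_mult[symmetric] algebra_simps)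
    also have "\<dots> \<le> (\<bar>k\<bar> + 1) * \<bar>f t - comb \<sigma> xs t\<bar>" by (simp add: mult_right_mono)
    also have "\<dots> < (\<bar>k\<bar> + 1) * (e / (\<bar>k\<bar> + 1))" using d by (intro mult_strict_left_mono) auto
    also have "\<dots> = e" by simp
    finally show "\<bar>k * f t - comb \<sigma> (map (\<lambda>(c,w,b). (k*c,w,b)) xs) t\<bar> < e" by (simp only: comb_scale)
  qed
qed

lemma N_diff: assumes "f \<in> Nset \<sigma>" "g \<in> Nset \<sigma>" shows "(\<lambda>t. f t - g t) \<in> Nset \<sigma>"
  using N_add[OF assms(1) N_scale[OF assms(2), of "-1"]] by simp

lemma N_affine: assumes "f \<in> Nset \<sigma>" shows "(\<lambda>t. f (w * t + b)) \<in> Nset \<sigma>"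
proof (rule NsetI)
  fix R e :: real assume e: "e > 0"
  define R' where "R' = \<bar>w\<bar> * \<bar>R\<bar> + \<bar>b\<bar>"
  obtain xs where xs: "\<forall>t\<in>{-R'..R'}. \<bar>f t - comb \<sigma> xs t\<bar> < e" using NsetD[OF assms(1) e] by blast
  show "\<exists>xs. \<forall>t\<in>{-R..R}. \<bar>f (w * t + b) - comb \<sigma> xs t\<bar> < e"
  proof (intro exI[of _ "map (\<lambda>(c,w',b'). (c, w'*w, w'*b+b')) xs"] ballI)
    fix t assume t: "t \<in> {-R..R}"
    have "\<bar>w * t + b\<bar> \<le> \<bar>w\<bar> * \<bar>t\<bar> + \<bar>b\<bar>" by (metis abs_mult abs_triangle_ineq)
    also have "\<dots> \<le> R'" unfolding R'_def using t by (intro add_right_mono mult_left_mono) auto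
    finally have "w * t + b \<in> {-R'..R'}" by auto
    then show "\<bar>f (w * t + b) - comb \<sigma> (map (\<lambda>(c,w',b'). (c, w'*w, w'*b+b')) xs) t\<bar> < e"
      using xs by (simp add: comb_affine)
  qed
qed

lemma N_limit:
  assumes "\<And>R e. e > 0 \<Longrightarrow> \<exists>g\<in>Nset \<sigma>. \<forall>t\<in>{-R..R}. \<bar>f t - g t\<bar> < e"
  shows "f \<in> Nset \<sigma>"
proof (rule NsetI)
  fix R e :: real assume e: "e > 0"
  obtain g where g: "g \<in> Nset \<sigma>" "\<forall>t\<in>{-R..R}. \<bar>f t - g t\<bar> < e/2" using assms[of "e/2" R] e by auto
  obtain xs where xs: "\<forall>t\<in>{-R..R}. \<bar>g t - comb \<sigma> xs t\<bar> < e/2" using NsetD[OF g(1), of "e/2" R] e by auto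
  show "\<exists>xs. \<forall>t\<in>{-R..R}. \<bar>f t - comb \<sigma> xs t\<bar> < e"
  proof (intro exI[of _ xs] ballI)
    fix t assume t: "t \<in> {-R..R}"
    have "\<bar>f t - comb \<sigma> xs t\<bar> \<le> \<bar>f t - g t\<bar> + \<bar>g t - comb \<sigma> xs t\<bar>"
      by (rule order_trans[OF _ abs_triangle_ineq]) simp
    then show "\<bar>f t - comb \<sigma> xs t\<bar> < e" using g(2) xs t by fastforce
  qed
qed

lemma N_sum: "(\<And>i. i \<in> I \<Longrightarrow> f i \<in> Nset \<sigma>) \<Longrightarrow> (\<lambda>t. \<Sum>i\<in>I. f i t) \<in> Nset \<sigma>"
proof (induction I rule: infinite_finite_induct)
  case (infinite A) then show ?case by (simp add: N_zero)
next
  case empty then show ?case by (simp add: N_zero)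
next
  case (insert x F) then show ?case by (simp add: N_add)
qed

lemma mvt_any:
  assumes d: "\<And>x. (g has_real_derivative g' x) (at x)"
  shows "\<exists>z. \<bar>z - x\<bar> \<le> \<bar>y - x\<bar> \<and> g y - g x = (y - x) * g' z"
proof (cases x y rule: linorder_cases)
  case less
  then obtain z where "x < z" "z < y" "g y - g x = (y - x) * g' z" using MVT2[of x y g g'] d by blast
  then show ?thesis by (intro exI[of _ z]) auto
next
  case equal then show ?thesis by auto
next
  case greater
  then obtain z where "y < z" "z < x" "g x - g y = (x - y) * g' z" using MVT2[of y x g g'] d by blast
  then show ?thesis by (intro exI[of _ z]) (auto simp: algebra_simps)
qed

lemma dq_unif:
  assumes d: "\<And>x. (g has_real_derivative g' x) (at x)" and c: "continuous_on UNIV g'" and e: "e > 0"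
  shows "\<exists>\<delta>>0. \<forall>h. h \<noteq> 0 \<and> \<bar>h\<bar> < \<delta> \<longrightarrow>
     (\<forall>t\<in>{-R..R}. \<bar>(g ((w+h)*t+b) - g (w*t+b)) / h - t * g' (w*t+b)\<bar> < e)"
proof -
  define R0 where "R0 = max R 0"
  have R0: "R0 \<ge> 0" by (simp add: R0_def)
  define M where "M = \<bar>w\<bar> * R0 + \<bar>b\<bar> + R0 + 1"
  have "uniformly_continuous_on (cball 0 M) g'"
    by (intro compact_uniformly_continuous continuous_on_subset[OF c]) auto
  moreover have e': "e / (R0 + 1) > 0" using e R0 by simp
  ultimately obtain d1 where d1: "d1 > 0" "\<And>x x'. x \<in> cball 0 M \<Longrightarrow> x' \<in> cball 0 M \<Longrightarrow> dist x' x < d1 \<Longrightarrow> dist (g' x') (g' x) < e / (R0 + 1)"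
    unfolding uniformly_continuous_on_def by metis
  define \<delta> where "\<delta> = min 1 (d1 / (R0 + 1))"
  have \<delta>: "\<delta> > 0" using d1 R0 by (simp add: \<delta>_def)
  show ?thesis
  proof (intro exI[of _ \<delta>] conjI allI impI ballI \<delta>)
    fix h t assume h: "h \<noteq> 0 \<and> \<bar>h\<bar> < \<delta>" and t: "t \<in> {-R..R}"
    have tR: "\<bar>t\<bar> \<le> R0" using t by (auto simp: R0_def)
    show "\<bar>(g ((w+h)*t+b) - g (w*t+b)) / h - t * g' (w*t+b)\<bar> < e"
    proof (cases "t = 0")
      case True then show ?thesis using e by simp
    next
      case False
      obtain z where z: "\<bar>z - (w*t+b)\<bar> \<le> \<bar>((w+h)*t+b) - (w*t+b)\<bar>"
        "g ((w+h)*t+b) - g (w*t+b) = (((w+h)*t+b) - (w*t+b)) * g' z"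
        using mvt_any[OF d, of "w*t+b" "(w+h)*t+b"] by blast
      have ht: "\<bar>((w+h)*t+b) - (w*t+b)\<bar> = \<bar>h\<bar> * \<bar>t\<bar>" by (simp add: algebra_simps abs_mult)
      have "\<bar>h\<bar> * \<bar>t\<bar> \<le> \<delta> * R0" using h tR by (intro mult_mono) auto
      also have "\<delta> * R0 < d1"
      proof -
        have "\<delta> * R0 \<le> d1 / (R0 + 1) * R0" using R0 by (intro mult_right_mono) (auto simp: \<delta>_def)
        also have "\<dots> < d1" using d1 R0 by (simp add: field_simps)
        finally show ?thesis .
      qed
      finally have zc: "\<bar>z - (w*t+b)\<bar> < d1" using z(1) ht by simp
      have "\<bar>h\<bar> * \<bar>t\<bar> \<le> 1 * R0" using h tR by (intro mult_mono) (auto simp: \<delta>_def)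
      then have zb: "\<bar>z - (w*t+b)\<bar> \<le> R0" using z(1) ht by simp
      have wb: "\<bar>w*t+b\<bar> \<le> \<bar>w\<bar> * R0 + \<bar>b\<bar>"
      proof -
        have "\<bar>w*t+b\<bar> \<le> \<bar>w\<bar> * \<bar>t\<bar> + \<bar>b\<bar>" by (metis abs_mult abs_triangle_ineq)
        also have "\<dots> \<le> \<bar>w\<bar> * R0 + \<bar>b\<bar>" using tR by (intro add_right_mono mult_left_mono) auto
        finally show ?thesis .
      qed
      have m1: "w*t+b \<in> cball 0 M" using wb R0 by (simp add: M_def dist_real_def)
      have m2: "z \<in> cball 0 M" using wb zb R0 by (simp add: M_def dist_real_def)
      have gd: "\<bar>g' z - g' (w*t+b)\<bar> < e / (R0 + 1)"
        using d1(2)[OF m1 m2] zc by (simp add: dist_real_def)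
      have q: "(g ((w+h)*t+b) - g (w*t+b)) / h = t * g' z"
        using z(2) h by (simp add: algebra_simps)
      have "\<bar>t * g' z - t * g' (w*t+b)\<bar> = \<bar>t\<bar> * \<bar>g' z - g' (w*t+b)\<bar>" by (simp add: abs_mult[symmetric] algebra_simps)
      also have "\<dots> \<le> R0 * \<bar>g' z - g' (w*t+b)\<bar>" using tR by (simp add: mult_right_mono)
      also have "\<dots> \<le> R0 * (e / (R0 + 1))" using gd R0 by (intro mult_left_mono) auto
      also have "\<dots> < e" using e R0 by (simp add: field_simps)
      finally show ?thesis using q by simp
    qed
  qed
qed

lemma deriv_chain:
  assumes d: "\<And>m x. m < k \<Longrightarrow> (D m has_real_derivative D (Suc m) x) (at x)"
    and c: "\<And>m. m \<le> k \<Longrightarrow> continuous_on UNIV (D m)"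
    and f: "D 0 \<in> Nset \<sigma>"
  shows "m \<le> k \<Longrightarrow> (\<lambda>t. t^m * D m (w*t+b)) \<in> Nset \<sigma>"
proof (induction m arbitrary: w)
  case 0 then show ?case using N_affine[OF f] by simp
next
  case (Suc m)
  have mk: "m < k" using Suc.prems by simp
  show ?case
  proof (rule N_limit)
    fix R e :: real assume e: "e > 0"
    define R0 where "R0 = max R 0"
    have R0: "R0 \<ge> 0" by (simp add: R0_def)
    have e': "e / (R0^m + 1) > 0" using e R0 by (simp add: add_nonneg_pos)
    obtain \<delta> where \<delta>: "\<delta> > 0" "\<And>h. h \<noteq> 0 \<and> \<bar>h\<bar> < \<delta> \<Longrightarrow>
       \<forall>t\<in>{-R..R}. \<bar>(D m ((w+h)*t+b) - D m (w*t+b)) / h - t * D (Suc m) (w*t+b)\<bar> < e / (R0^m + 1)"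
      using dq_unif[OF d[OF mk] c[of "Suc m"] e', of R w b] Suc.prems by blast
    define h where "h = \<delta> / 2"
    have h: "h \<noteq> 0 \<and> \<bar>h\<bar> < \<delta>" using \<delta> by (simp add: h_def)
    define G where "G = (\<lambda>t. (1/h) * (t^m * D m ((w+h)*t+b) - t^m * D m (w*t+b)))"
    have "G \<in> Nset \<sigma>" unfolding G_def
      using Suc.IH[of "w+h"] Suc.IH[of w] mk by (intro N_scale N_diff) auto
    moreover have "\<forall>t\<in>{-R..R}. \<bar>t^(Suc m) * D (Suc m) (w*t+b) - G t\<bar> < e"
    proof
      fix t assume t: "t \<in> {-R..R}"
      have tR: "\<bar>t\<bar> \<le> R0" using t by (auto simp: R0_def)
      have q: "\<bar>(D m ((w+h)*t+b) - D m (w*t+b)) / h - t * D (Suc m) (w*t+b)\<bar> < e / (R0^m + 1)"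
        using \<delta>(2)[OF h] t by blast
      have "G t - t^(Suc m) * D (Suc m) (w*t+b) = t^m * ((D m ((w+h)*t+b) - D m (w*t+b)) / h - t * D (Suc m) (w*t+b))"
        unfolding G_def by (simp add: field_simps)
      then have "\<bar>t^(Suc m) * D (Suc m) (w*t+b) - G t\<bar> = \<bar>t\<bar>^m * \<bar>(D m ((w+h)*t+b) - D m (w*t+b)) / h - t * D (Suc m) (w*t+b)\<bar>"
        by (metis abs_minus_commute abs_mult power_abs)
      also have "\<dots> \<le> R0^m * \<bar>(D m ((w+h)*t+b) - D m (w*t+b)) / h - t * D (Suc m) (w*t+b)\<bar>"
        using tR by (intro mult_right_mono power_mono) auto
      also have "\<dots> \<le> R0^m * (e / (R0^m + 1))" using q R0 by (intro mult_left_mono) auto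
      also have "\<dots> < e"
      proof -
        have pos: "1 + R0^m > 0" using R0 by (simp add: add_pos_nonneg)
        then show ?thesis using e by (simp add: field_simps)
      qed
      finally show "\<bar>t^(Suc m) * D (Suc m) (w*t+b) - G t\<bar> < e" .
    qed
    ultimately show "\<exists>g\<in>Nset \<sigma>. \<forall>t\<in>{-R..R}. \<bar>t^(Suc m) * D (Suc m) (w*t+b) - g t\<bar> < e" by blast
  qed
qed


lemma antideriv_exists:
  fixes g :: "real \<Rightarrow> real"
  assumes c: "continuous_on UNIV g"
  shows "\<exists>G. \<forall>x. (G has_real_derivative g x) (at x)"
proof -
  define G where "G = (\<lambda>y. integral {0..y} g - integral {y..0} g)"
  have "(G has_real_derivative g x) (at x)" for x
  proof -
    define a where "a = - \<bar>x\<bar> - 1"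
    define b where "b = \<bar>x\<bar> + 1"
    have ax: "a < x" and xb: "x < b" and a0: "a \<le> 0" by (auto simp: a_def b_def)
    have int: "g integrable_on {a..y}" for y by (intro integrable_continuous_real continuous_on_subset[OF c]) auto
    have eq: "G y = integral {a..y} g - integral {a..0} g" if ya: "a \<le> y" for y
    proof (cases "y \<ge> 0")
      case True
      have "integral {y..0} g = 0"
      proof (cases "y = 0")
        case True then show ?thesis by simp
      next
        case False then have "{y..0} = ({}::real set)" using \<open>y \<ge> 0\<close> by auto
        then show ?thesis by simp
      qed
      moreover have "integral {a..0} g + integral {0..y} g = integral {a..y} g"
        by (rule Henstock_Kurzweil_Integration.integral_combine[OF a0 True int])
      ultimately show ?thesis by (simp add: G_def)
    next
      case False
      then have "{0..y} = ({}::real set)" by auto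
      then have "integral {0..y} g = 0" by simp
      moreover have "integral {a..y} g + integral {y..0} g = integral {a..0} g"
        using False by (intro Henstock_Kurzweil_Integration.integral_combine[OF ya _ int]) auto
      ultimately show ?thesis by (simp add: G_def)
    qed
    have "((\<lambda>y. integral {a..y} g) has_real_derivative g x) (at x within {a..b})"
      using ax xb by (intro integral_has_real_derivative continuous_on_subset[OF c]) auto
    then have "((\<lambda>y. integral {a..y} g) has_real_derivative g x) (at x)"
      using at_within_Icc_at[OF ax xb] by simp
    then have D': "((\<lambda>y. integral {a..y} g - integral {a..0} g) has_real_derivative g x) (at x)"
      using DERIV_diff[OF _ DERIV_const] by fastforce
    show ?thesis
    proof (rule has_field_derivative_transform_within_open[OF D' open_greaterThanLessThan])
      show "x \<in> {a<..<b}" using ax xb by simp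
      fix y assume "y \<in> {a<..<b}"
      then show "integral {a..y} g - integral {a..0} g = G y" using eq[of y] by simp
    qed
  qed
  then show ?thesis by blast
qed

definition ant :: "(real \<Rightarrow> real) \<Rightarrow> real \<Rightarrow> real" where
  "ant g = (SOME G. \<forall>x. (G has_real_derivative g x) (at x))"

lemma ant_deriv: "continuous_on UNIV g \<Longrightarrow> (ant g has_real_derivative g x) (at x)"
  unfolding ant_def using someI_ex[OF antideriv_exists] by blast

lemma ant_diff:
  assumes c: "continuous_on UNIV g" and F: "\<And>x. (F has_real_derivative g x) (at x)"
  shows "F y - F z = ant g y - ant g z"
proof -
  have "\<forall>x. ((\<lambda>x. F x - ant g x) has_real_derivative 0) (at x)"
    using DERIV_diff[OF F ant_deriv[OF c]] by simp
  then have "F y - ant g y = F z - ant g z" by (rule DERIV_isconst_all)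
  then show ?thesis by simp
qed

definition sm :: "real \<Rightarrow> (real \<Rightarrow> real) \<Rightarrow> real \<Rightarrow> real" where
  "sm h g y = (ant g (y + h) - ant g y) / h"

definition Dq :: "real \<Rightarrow> (real \<Rightarrow> real) \<Rightarrow> real \<Rightarrow> real" where
  "Dq h g y = (g (y + h) - g y) / h"

lemma cont_shift: fixes g :: "real \<Rightarrow> real" assumes c: "continuous_on UNIV g" shows "continuous_on UNIV (\<lambda>y. g (y + h))"
proof -
  have "continuous_on UNIV (\<lambda>y::real. y + h)" by (intro continuous_intros)
  then show ?thesis by (rule continuous_on_compose2[OF c]) simp
qed

lemma Dq_cont: assumes c: "continuous_on UNIV g" shows "continuous_on UNIV (Dq h g)"
proof -
  have e: "Dq h g = (\<lambda>y. (1/h) * (g (y + h) - g y))" by (auto simp: Dq_def fun_eq_iff)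
  show ?thesis unfolding e
    by (intro continuous_on_mult continuous_on_const continuous_on_diff cont_shift c)
qed

lemma sm_deriv: "continuous_on UNIV g \<Longrightarrow> (sm h g has_real_derivative Dq h g y) (at y)"
proof -
  assume c: "continuous_on UNIV g"
  have "((\<lambda>y. ant g (y + h)) has_real_derivative g (y + h)) (at y)"
    using ant_deriv[OF c, of "y + h"] DERIV_shift by blast
  then have "((\<lambda>y. (ant g (y + h) - ant g y) / h) has_real_derivative (g (y + h) - g y) / h) (at y)"
    by (intro DERIV_cdivide DERIV_diff ant_deriv[OF c])
  then show ?thesis by (simp add: sm_def[abs_def] Dq_def)
qed

lemma sm_cont: assumes c: "continuous_on UNIV g" shows "continuous_on UNIV (sm h g)"
proof -
  have "isCont (sm h g) x" for x using DERIV_isCont[OF sm_deriv[OF c]] .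
  then show ?thesis by (simp add: continuous_at_imp_continuous_on)
qed

lemma sm_Dq: "continuous_on UNIV g \<Longrightarrow> sm h (Dq h g) = Dq h (sm h g)"
proof
  fix y assume c: "continuous_on UNIV g"
  have "sm h g (y + h) - sm h g y = ant (Dq h g) (y + h) - ant (Dq h g) y"
    by (rule ant_diff[OF Dq_cont[OF c] sm_deriv[OF c]])
  then show "sm h (Dq h g) y = Dq h (sm h g) y" by (simp add: sm_def[of h "Dq h g"] Dq_def[of h "sm h g"])
qed

lemma sm_mvt:
  assumes c: "continuous_on UNIV g" and h: "h > 0"
  shows "\<exists>\<xi>. y \<le> \<xi> \<and> \<xi> \<le> y + h \<and> sm h g y = g \<xi>"
proof -
  obtain z where z: "y < z" "z < y + h" "ant g (y + h) - ant g y = (y + h - y) * g z"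
    using MVT2[of y "y + h" "ant g" g] h ant_deriv[OF c] by auto
  then show ?thesis using h by (intro exI[of _ z]) (auto simp: sm_def)
qed

lemma smpow_cont: "continuous_on UNIV g \<Longrightarrow> continuous_on UNIV ((sm h ^^ j) g)"
  by (induction j) (simp_all add: sm_cont)

lemma Dqpow_cont: "continuous_on UNIV g \<Longrightarrow> continuous_on UNIV ((Dq h ^^ j) g)"
  by (induction j) (simp_all add: Dq_cont)

lemma smpow_mvt:
  assumes c: "continuous_on UNIV g" and h: "h > 0"
  shows "\<exists>\<xi>. y \<le> \<xi> \<and> \<xi> \<le> y + real j * h \<and> (sm h ^^ j) g y = g \<xi>"
proof (induction j arbitrary: y)
  case 0 then show ?case by auto
next
  case (Suc j)
  obtain \<xi>1 where x1: "y \<le> \<xi>1" "\<xi>1 \<le> y + h" "sm h ((sm h ^^ j) g) y = (sm h ^^ j) g \<xi>1"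
    using sm_mvt[OF smpow_cont[OF c] h] by blast
  obtain \<xi>2 where x2: "\<xi>1 \<le> \<xi>2" "\<xi>2 \<le> \<xi>1 + real j * h" "(sm h ^^ j) g \<xi>1 = g \<xi>2"
    using Suc.IH by blast
  show ?case using x1 x2 by (intro exI[of _ \<xi>2]) (auto simp: algebra_simps)
qed

lemma Dq_smpow: "continuous_on UNIV g \<Longrightarrow> Dq h ((sm h ^^ j) g) = (sm h ^^ j) (Dq h g)"
proof (induction j)
  case 0 then show ?case by simp
next
  case (Suc j)
  have "Dq h ((sm h ^^ Suc j) g) = Dq h (sm h ((sm h ^^ j) g))" by simp
  also have "\<dots> = sm h (Dq h ((sm h ^^ j) g))" using sm_Dq[OF smpow_cont[OF Suc.prems]] by simp
  also have "\<dots> = (sm h ^^ Suc j) (Dq h g)" using Suc by simp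
  finally show ?case .
qed

lemma Dq_N: "g \<in> Nset \<sigma> \<Longrightarrow> Dq h g \<in> Nset \<sigma>"
  unfolding Dq_def using N_scale[OF N_diff[OF N_affine[of g \<sigma> 1 h]], of g "1/h"] by (simp add: divide_inverse mult.commute)

lemma sm_N:
  assumes N: "g \<in> Nset \<sigma>" and c: "continuous_on UNIV g" and h: "h > 0"
  shows "sm h g \<in> Nset \<sigma>"
proof (rule N_limit)
  fix R e :: real assume e: "e > 0"
  define M where "M = \<bar>R\<bar> + h + 1"
  have "uniformly_continuous_on (cball 0 M) g"
    by (intro compact_uniformly_continuous continuous_on_subset[OF c]) auto
  then obtain d where d: "d > 0" "\<And>x x'. x \<in> cball 0 M \<Longrightarrow> x' \<in> cball 0 M \<Longrightarrow> dist x' x < d \<Longrightarrow> dist (g x') (g x) < e"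
    unfolding uniformly_continuous_on_def using e by metis
  obtain n :: nat where n: "h / d < real n" using reals_Archimedean2 by blast
  have "0 < h / d" using h d(1) by simp
  then have "0 < real n" using n by linarith
  then have npos: "n > 0" by simp
  have hn: "h / real n < d" using n npos d by (simp add: field_simps mult.commute)
  define a where "a = (\<lambda>y i. y + real i * h / real n)"
  define Rn where "Rn = (\<lambda>y. \<Sum>i<n. (1 / real n) * g (1 * y + real i * h / real n))"
  have "Rn \<in> Nset \<sigma>" unfolding Rn_def by (intro N_sum N_scale N_affine N)
  moreover have "\<forall>t\<in>{-R..R}. \<bar>sm h g t - Rn t\<bar> < e"
  proof
    fix y assume y: "y \<in> {-R..R}"
    define T where "T = (\<lambda>i. (ant g (a y (Suc i)) - ant g (a y i)) / h)"
    have sumT: "(\<Sum>i<n. T i) = sm h g y"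
    proof -
      have "(\<Sum>i<n. T i) = (\<Sum>i<n. ant g (a y (Suc i)) - ant g (a y i)) / h"
        unfolding T_def by (simp add: sum_divide_distrib)
      also have "\<dots> = (ant g (a y n) - ant g (a y 0)) / h" using sum_lessThan_telescope[of "\<lambda>i. ant g (a y i)" n] by simp
      also have "\<dots> = sm h g y" using npos by (simp add: a_def sm_def)
      finally show ?thesis .
    qed
    have termb: "\<bar>T i - (1 / real n) * g (1 * y + real i * h / real n)\<bar> < e / real n" if "i < n" for i
    proof -
      have lt: "a y i < a y (Suc i)" using h npos by (simp add: a_def field_simps)
      obtain z where z: "a y i < z" "z < a y (Suc i)" "ant g (a y (Suc i)) - ant g (a y i) = (a y (Suc i) - a y i) * g z"
        using MVT2[OF lt, of "ant g" g] ant_deriv[OF c] by blast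
      have step: "a y (Suc i) - a y i = h / real n" by (simp add: a_def add_divide_distrib algebra_simps)
      have Tz: "T i = g z / real n" unfolding T_def using z(3) step h by simp
      have ai: "a y i \<in> cball 0 M"
      proof -
        have "real i * h / real n \<le> h" using that h npos by (simp add: field_simps)
        moreover have "0 \<le> real i * h / real n" using h by simp
        ultimately show ?thesis using y by (auto simp: a_def M_def dist_real_def abs_le_iff)
      qed
      have zi: "z \<in> cball 0 M"
      proof -
        have "real (Suc i) * h / real n \<le> h" using that h npos by (simp add: field_simps del: of_nat_Suc)
        then have "a y (Suc i) \<le> y + h" by (simp add: a_def)
        moreover have "a y i \<ge> y" using h by (simp add: a_def)
        ultimately show ?thesis using z(1,2) y by (auto simp: M_def dist_real_def abs_le_iff)
      qed
      have "dist z (a y i) < d" using z(1,2) step hn by (simp add: dist_real_def)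
      then have "\<bar>g z - g (a y i)\<bar> < e" using d(2)[OF ai zi] by (simp add: dist_real_def)
      then have "\<bar>g z - g (a y i)\<bar> / real n < e / real n" using npos by (simp add: divide_strict_right_mono)
      moreover have "T i - (1 / real n) * g (1 * y + real i * h / real n) = (g z - g (a y i)) / real n"
        using Tz by (simp add: a_def diff_divide_distrib mult.commute)
      ultimately show ?thesis by simp
    qed
    have "\<bar>sm h g y - Rn y\<bar> = \<bar>\<Sum>i<n. T i - (1 / real n) * g (1 * y + real i * h / real n)\<bar>"
      unfolding Rn_def sumT[symmetric] by (simp add: sum_subtractf)
    also have "\<dots> \<le> (\<Sum>i<n. \<bar>T i - (1 / real n) * g (1 * y + real i * h / real n)\<bar>)" by (rule sum_abs)
    also have "\<dots> < (\<Sum>i<n. e / real n)" using npos termb by (intro sum_strict_mono) auto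
    also have "\<dots> = e" using npos by simp
    finally show "\<bar>sm h g y - Rn y\<bar> < e" .
  qed
  ultimately show "\<exists>g'\<in>Nset \<sigma>. \<forall>t\<in>{-R..R}. \<bar>sm h g t - g' t\<bar> < e" by blast
qed

lemma smpow_N:
  assumes "g \<in> Nset \<sigma>" "continuous_on UNIV g" "h > 0"
  shows "(sm h ^^ j) g \<in> Nset \<sigma>"
  by (induction j) (auto intro: sm_N smpow_cont assms)


lemma poly_limit:
  fixes P :: "nat \<Rightarrow> real poly"
  assumes "\<And>n. degree (P n) \<le> k" "infinite X" "\<And>x. x \<in> X \<Longrightarrow> (\<lambda>n. poly (P n) x) \<longlonglongrightarrow> f x"
  shows "\<exists>p. degree p \<le> k \<and> (\<forall>x\<in>X. f x = poly p x)"
  using assms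
proof (induction k arbitrary: X f P)
  case 0
  obtain x0 where x0: "x0 \<in> X" using "0.prems"(2) by (metis finite.emptyI ex_in_conv)
  have const: "poly (P n) x = coeff (P n) 0" for n x
    using "0.prems"(1)[of n] by (simp add: poly_altdef)
  have "f x = f x0" if "x \<in> X" for x
  proof -
    have "(\<lambda>n. coeff (P n) 0) \<longlonglongrightarrow> f x" using "0.prems"(3)[OF that] by (simp add: const)
    moreover have "(\<lambda>n. coeff (P n) 0) \<longlonglongrightarrow> f x0" using "0.prems"(3)[OF x0] by (simp add: const)
    ultimately show ?thesis by (rule LIMSEQ_unique)
  qed
  then show ?case by (intro exI[of _ "[:f x0:]"]) auto
next
  case (Suc k)
  obtain a where a: "a \<in> X" using Suc.prems(2) by (metis finite.emptyI ex_in_conv)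
  define Q where "Q = (\<lambda>n. synthetic_div (P n) a)"
  have dQ: "degree (Q n) \<le> k" for n using Suc.prems(1)[of n] by (simp add: Q_def degree_synthetic_div)
  have id: "poly (P n) x = (x - a) * poly (Q n) x + poly (P n) a" for n x
  proof -
    have "poly (P n) x = poly ([:-a, 1:] * synthetic_div (P n) a + [:poly (P n) a:]) x"
      by (simp only: synthetic_div_correct')
    then show ?thesis by (simp add: Q_def algebra_simps)
  qed
  have lim: "(\<lambda>n. poly (Q n) x) \<longlonglongrightarrow> (f x - f a) / (x - a)" if x: "x \<in> X - {a}" for x
  proof -
    have "(\<lambda>n. (poly (P n) x - poly (P n) a) / (x - a)) \<longlonglongrightarrow> (f x - f a) / (x - a)"
      using x a by (intro tendsto_intros Suc.prems(3)) auto
    moreover have "(poly (P n) x - poly (P n) a) / (x - a) = poly (Q n) x" for n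
      using x id[of n x] by (auto simp: field_simps)
    ultimately show ?thesis by simp
  qed
  have inf: "infinite (X - {a})" by (rule Diff_infinite_finite) (simp_all add: Suc.prems(2))
  obtain q where q: "degree q \<le> k" "\<forall>x\<in>X - {a}. (f x - f a) / (x - a) = poly q x"
    using Suc.IH[where X="X - {a}" and f="\<lambda>x. (f x - f a) / (x - a)" and P=Q, OF dQ inf lim] by blast
  define p where "p = [:f a:] + [:-a, 1:] * q"
  have "degree ([:-a, 1:] * q) \<le> Suc k"
    using degree_mult_le[of "[:-a, 1:]" q] q(1) by simp
  then have "degree p \<le> Suc k" unfolding p_def
    by (intro degree_add_le) auto
  moreover have "f x = poly p x" if "x \<in> X" for x
  proof (cases "x = a")
    case True then show ?thesis by (simp add: p_def)
  next
    case False
    then have "(f x - f a) / (x - a) = poly q x" using q(2) that by auto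
    then show ?thesis using False by (simp add: p_def field_simps)
  qed
  ultimately show ?case by blast
qed

lemma zero_deriv_poly:
  assumes d: "\<And>m x. m < k \<Longrightarrow> (D m has_real_derivative D (Suc m) x) (at x)"
    and z: "\<And>x. D k x = (0::real)"
  shows "\<exists>p. degree p \<le> k \<and> (\<forall>x. D 0 x = poly p x)"
proof -
  define diff where "diff = (\<lambda>m. if m \<le> k then D m else (\<lambda>_. 0))"
  have Dk: "D k = (\<lambda>_. 0)" using z by auto
  have der: "\<forall>m x. DERIV (diff m) x :> diff (Suc m) x"
  proof (intro allI)
    fix m x
    show "DERIV (diff m) x :> diff (Suc m) x"
    proof (cases "m < k")
      case True then show ?thesis using d[OF True] by (simp add: diff_def)
    next
      case False
      then have "diff m = (\<lambda>_. 0)" "diff (Suc m) x = 0" using Dk by (auto simp: diff_def)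
      then show ?thesis by simp
    qed
  qed
  define p where "p = (\<Sum>m<k. monom (diff m 0 / fact m) m)"
  have "degree p \<le> k" unfolding p_def
    by (intro degree_sum_le) (auto intro: order_trans[OF degree_monom_le])
  moreover have "D 0 x = poly p x" for x
  proof -
    obtain t where "diff 0 x = (\<Sum>m<k. (diff m 0 / fact m) * x ^ m) + (diff k t / fact k) * x ^ k"
      using Maclaurin_all_le[OF refl der, of x k] by blast
    moreover have "diff k t = 0" using z by (simp add: diff_def)
    moreover have "diff 0 = D 0" by (simp add: diff_def)
    ultimately show ?thesis by (simp add: p_def poly_sum poly_monom)
  qed
  ultimately show ?thesis by blast
qed


lemma monomial_in_N:
  assumes c: "continuous_on UNIV \<sigma>" and np: "\<not> is_polynomial_fun \<sigma>"
  shows "(\<lambda>t. t^k) \<in> Nset \<sigma>"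
proof -
  define D where "D = (\<lambda>h m. (sm h ^^ (k - m)) ((Dq h ^^ m) \<sigma>))"
  have Dcont: "continuous_on UNIV (D h m)" for h m
    unfolding D_def by (intro smpow_cont Dqpow_cont c)
  have Dder: "(D h m has_real_derivative D h (Suc m) x) (at x)" if m: "m < k" for h m x
  proof -
    define j where "j = k - Suc m"
    have kj: "k - m = Suc j" using m by (simp add: j_def)
    have cj: "continuous_on UNIV ((sm h ^^ j) ((Dq h ^^ m) \<sigma>))" by (intro smpow_cont Dqpow_cont c)
    have "D h m = sm h ((sm h ^^ j) ((Dq h ^^ m) \<sigma>))" by (simp add: D_def kj)
    moreover have "(sm h ((sm h ^^ j) ((Dq h ^^ m) \<sigma>)) has_real_derivative
        Dq h ((sm h ^^ j) ((Dq h ^^ m) \<sigma>)) x) (at x)" by (rule sm_deriv[OF cj])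
    moreover have "Dq h ((sm h ^^ j) ((Dq h ^^ m) \<sigma>)) = (sm h ^^ j) ((Dq h ^^ Suc m) \<sigma>)"
      using Dq_smpow[OF Dqpow_cont[OF c], of h j m] by simp
    moreover have "(sm h ^^ j) ((Dq h ^^ Suc m) \<sigma>) = D h (Suc m)" by (simp add: D_def j_def)
    ultimately show ?thesis by simp
  qed
  show ?thesis
  proof (cases "\<exists>h>0. \<exists>y. (Dq h ^^ k) \<sigma> y \<noteq> 0")
    case True
    then obtain h y0 where h: "h > 0" and y0: "(Dq h ^^ k) \<sigma> y0 \<noteq> 0" by blast
    have D0: "D h 0 \<in> Nset \<sigma>" unfolding D_def by (simp add: smpow_N[OF N_sigma c h])
    have "(\<lambda>t. t^k * D h k (0*t+y0)) \<in> Nset \<sigma>"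
      by (rule deriv_chain[of k "D h", OF Dder Dcont D0]) auto
    then have "(\<lambda>t. t^k * (Dq h ^^ k) \<sigma> y0) \<in> Nset \<sigma>" by (simp add: D_def)
    from N_scale[OF this, of "1 / (Dq h ^^ k) \<sigma> y0"] show ?thesis using y0 by simp
  next
    case False
    then have zero: "\<And>h y. h > 0 \<Longrightarrow> (Dq h ^^ k) \<sigma> y = 0" by blast
    define hn where "hn = (\<lambda>n::nat. inverse (real (Suc n)))"
    have hpos: "hn n > 0" for n by (simp add: hn_def)
    have "\<exists>p. degree p \<le> k \<and> (\<forall>x. D (hn n) 0 x = poly p x)" for n
    proof (rule zero_deriv_poly)
      show "\<And>m x. m < k \<Longrightarrow> (D (hn n) m has_real_derivative D (hn n) (Suc m) x) (at x)" by (rule Dder)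
      show "\<And>x. D (hn n) k x = 0" using zero[OF hpos] by (simp add: D_def)
    qed
    then obtain P where P: "\<And>n. degree (P n) \<le> k" "\<And>n x. D (hn n) 0 x = poly (P n) x" by metis
    have lim: "(\<lambda>n. poly (P n) x) \<longlonglongrightarrow> \<sigma> x" for x
    proof -
      have "\<forall>n. \<exists>\<xi>. x \<le> \<xi> \<and> \<xi> \<le> x + real k * hn n \<and> (sm (hn n) ^^ k) \<sigma> x = \<sigma> \<xi>"
        using smpow_mvt[OF c hpos] by blast
      then obtain \<xi> where \<xi>0: "\<forall>n. x \<le> \<xi> n \<and> \<xi> n \<le> x + real k * hn n \<and> (sm (hn n) ^^ k) \<sigma> x = \<sigma> (\<xi> n)"
        by (rule choice[THEN exE])
      then have \<xi>: "\<And>n. x \<le> \<xi> n" "\<And>n. \<xi> n \<le> x + real k * hn n" "\<And>n. (sm (hn n) ^^ k) \<sigma> x = \<sigma> (\<xi> n)"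
        by auto
      have "(\<lambda>n. x + real k * hn n) \<longlonglongrightarrow> x + real k * 0"
        unfolding hn_def by (rule tendsto_add[OF tendsto_const tendsto_mult[OF tendsto_const LIMSEQ_inverse_real_of_nat]])
      then have up: "(\<lambda>n. x + real k * hn n) \<longlonglongrightarrow> x" by simp
      have "\<xi> \<longlonglongrightarrow> x"
      proof (rule tendsto_sandwich[of "\<lambda>n. x" \<xi> sequentially "\<lambda>n. x + real k * hn n"])
        show "\<forall>\<^sub>F n in sequentially. x \<le> \<xi> n" using \<xi>(1) by simp
        show "\<forall>\<^sub>F n in sequentially. \<xi> n \<le> x + real k * hn n" using \<xi>(2) by simp
        show "(\<lambda>n. x) \<longlonglongrightarrow> x" by simp
        show "(\<lambda>n. x + real k * hn n) \<longlonglongrightarrow> x" by (rule up)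
      qed
      moreover have "isCont \<sigma> x" using c by (simp add: continuous_on_eq_continuous_at)
      ultimately have "(\<lambda>n. \<sigma> (\<xi> n)) \<longlonglongrightarrow> \<sigma> x" by (rule isCont_tendsto_compose[rotated])
      moreover have "poly (P n) x = \<sigma> (\<xi> n)" for n using P(2)[of n x] \<xi>(3)[of n] by (simp add: D_def)
      ultimately show ?thesis by simp
    qed
    obtain p where "degree p \<le> k" "\<forall>x\<in>UNIV. \<sigma> x = poly p x"
      using poly_limit[of P k UNIV \<sigma>, OF P(1) infinite_UNIV_char_0 lim] by blast
    then have "is_polynomial_fun \<sigma>" unfolding is_polynomial_fun_def by blast
    with np show ?thesis by contradiction
  qed
qed

lemma poly_in_N:
  assumes c: "continuous_on UNIV \<sigma>" and np: "\<not> is_polynomial_fun \<sigma>"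
  shows "poly p \<in> Nset \<sigma>"
proof -
  have "(\<lambda>t. \<Sum>i\<le>degree p. coeff p i * t ^ i) \<in> Nset \<sigma>"
    by (intro N_sum N_scale monomial_in_N[OF c np])
  then show ?thesis by (simp add: poly_altdef[abs_def])
qed

lemma cont_in_N:
  assumes c: "continuous_on UNIV \<sigma>" and np: "\<not> is_polynomial_fun \<sigma>" and f: "continuous_on UNIV f"
  shows "f \<in> Nset \<sigma>"
proof (rule N_limit)
  fix R e :: real assume e: "e > 0"
  have "\<exists>g. (\<exists>p. g = poly p) \<and> (\<forall>x\<in>{-R..R}. \<bar>f x - g x\<bar> < e)"
  proof (rule Stone_Weierstrass_HOL[of "{-R..R}" "\<lambda>g. \<exists>p. g = poly p"])
    show "compact {-R..R}" by simp
    show "\<And>c. \<exists>p. (\<lambda>x. c) = poly p" by (rule exI[of _ "[:_:]"]) (simp add: fun_eq_iff)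
    show "\<And>g. \<exists>p. g = poly p \<Longrightarrow> continuous_on {-R..R} g"
      by (auto intro!: continuous_on_poly continuous_on_id)
    show "\<exists>p. (\<lambda>x. g x + h x) = poly p" if a: "(\<exists>p. g = poly p) \<and> (\<exists>p. h = poly p)" for g h
    proof -
      obtain p q where "g = poly p" "h = poly q" using a by blast
      then show ?thesis by (intro exI[of _ "p + q"]) (simp add: fun_eq_iff)
    qed
    show "\<exists>p. (\<lambda>x. g x * h x) = poly p" if a: "(\<exists>p. g = poly p) \<and> (\<exists>p. h = poly p)" for g h
    proof -
      obtain p q where "g = poly p" "h = poly q" using a by blast
      then show ?thesis by (intro exI[of _ "p * q"]) (simp add: fun_eq_iff)
    qed
    show "\<And>x y. x \<in> {-R..R} \<and> y \<in> {-R..R} \<and> x \<noteq> y \<Longrightarrow> \<exists>g. (\<exists>p. g = poly p) \<and> g x \<noteq> g y"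
      by (intro exI[of _ "poly [:0, 1:]"]) auto
    show "continuous_on {-R..R} f" using f by (rule continuous_on_subset) simp
    show "0 < e" by (rule e)
  qed
  then show "\<exists>g\<in>Nset \<sigma>. \<forall>t\<in>{-R..R}. \<bar>f t - g t\<bar> < e" using poly_in_N[OF c np] by blast
qed


definition combm :: "(real \<Rightarrow> real) \<Rightarrow> (real \<times> (real^'m) \<times> real) list \<Rightarrow> real^'m \<Rightarrow> real" where
  "combm \<sigma> xs x = (\<Sum>(c,a,b)\<leftarrow>xs. c * \<sigma> (a \<bullet> x + b))"

definition Nm :: "(real \<Rightarrow> real) \<Rightarrow> (real^'m \<Rightarrow> real) set" where
  "Nm \<sigma> = {f. \<forall>K e. compact K \<and> e > 0 \<longrightarrow> (\<exists>xs. \<forall>x\<in>K. \<bar>f x - combm \<sigma> xs x\<bar> < e)}"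

lemma combm_append: "combm \<sigma> (xs @ ys) x = combm \<sigma> xs x + combm \<sigma> ys x"
  by (simp add: combm_def)

lemma combm_scale: "combm \<sigma> (map (\<lambda>(c,a,b). (k*c,a,b)) xs) x = k * combm \<sigma> xs x"
  by (induction xs) (auto simp: combm_def algebra_simps)

lemma combm_ridge: "combm \<sigma> (map (\<lambda>(c,w,b). (c, w *\<^sub>R a, b)) xs) x = comb \<sigma> xs (a \<bullet> x)"
  by (induction xs) (auto simp: combm_def comb_def algebra_simps)

lemma NmD: "f \<in> Nm \<sigma> \<Longrightarrow> compact K \<Longrightarrow> e > 0 \<Longrightarrow> \<exists>xs. \<forall>x\<in>K. \<bar>f x - combm \<sigma> xs x\<bar> < e"
  by (simp add: Nm_def)

lemma Nm_ridge:
  assumes g: "g \<in> Nset \<sigma>"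
  shows "(\<lambda>x. g (a \<bullet> x)) \<in> (Nm \<sigma> :: (real^'m \<Rightarrow> real) set)"
  unfolding Nm_def
proof (intro CollectI allI impI, elim conjE)
  fix K :: "(real^'m) set" and e :: real
  assume K: "compact K" and e: "e > 0"
  obtain B where B: "\<And>x. x \<in> K \<Longrightarrow> norm x \<le> B"
    using compact_imp_bounded[OF K] bounded_iff by blast
  define R where "R = norm a * B"
  obtain xs where xs: "\<forall>t\<in>{-R..R}. \<bar>g t - comb \<sigma> xs t\<bar> < e" using NsetD[OF g e] by blast
  show "\<exists>xs. \<forall>x\<in>K. \<bar>g (a \<bullet> x) - combm \<sigma> xs x\<bar> < e"
  proof (intro exI[of _ "map (\<lambda>(c,w,b). (c, w *\<^sub>R a, b)) xs"] ballI)
    fix x assume x: "x \<in> K"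
    have "\<bar>a \<bullet> x\<bar> \<le> norm a * norm x" by (rule Cauchy_Schwarz_ineq2)
    also have "\<dots> \<le> R" unfolding R_def using B[OF x] by (simp add: mult_left_mono)
    finally have "a \<bullet> x \<in> {-R..R}" by auto
    then show "\<bar>g (a \<bullet> x) - combm \<sigma> (map (\<lambda>(c,w,b). (c, w *\<^sub>R a, b)) xs) x\<bar> < e"
      using xs by (simp add: combm_ridge)
  qed
qed

lemma Nm_approx:
  assumes "\<And>K e. compact K \<Longrightarrow> e > 0 \<Longrightarrow> \<exists>g\<in>Nm \<sigma>. \<forall>x\<in>K. \<bar>f x - g x\<bar> < e"
  shows "f \<in> Nm \<sigma>"
  unfolding Nm_def
proof (intro CollectI allI impI, elim conjE)
  fix K :: "(real^'a) set" and e :: real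
  assume K: "compact K" and e: "e > 0"
  obtain g where g: "g \<in> Nm \<sigma>" "\<forall>x\<in>K. \<bar>f x - g x\<bar> < e/2" using assms[OF K, of "e/2"] e by auto
  obtain xs where xs: "\<forall>x\<in>K. \<bar>g x - combm \<sigma> xs x\<bar> < e/2" using NmD[OF g(1) K, of "e/2"] e by auto
  show "\<exists>xs. \<forall>x\<in>K. \<bar>f x - combm \<sigma> xs x\<bar> < e"
  proof (intro exI[of _ xs] ballI)
    fix x assume x: "x \<in> K"
    have "\<bar>f x - combm \<sigma> xs x\<bar> \<le> \<bar>f x - g x\<bar> + \<bar>g x - combm \<sigma> xs x\<bar>"
      by (rule order_trans[OF _ abs_triangle_ineq]) simp
    then show "\<bar>f x - combm \<sigma> xs x\<bar> < e" using g(2) xs x by fastforce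
  qed
qed

lemma Nm_add: assumes "f \<in> Nm \<sigma>" "g \<in> Nm \<sigma>" shows "(\<lambda>x. f x + g x) \<in> Nm \<sigma>"
  unfolding Nm_def
proof (intro CollectI allI impI, elim conjE)
  fix K :: "(real^'a) set" and e :: real
  assume K: "compact K" and e: "e > 0"
  obtain xs where xs: "\<forall>x\<in>K. \<bar>f x - combm \<sigma> xs x\<bar> < e/2" using NmD[OF assms(1) K, of "e/2"] e by auto
  obtain ys where ys: "\<forall>x\<in>K. \<bar>g x - combm \<sigma> ys x\<bar> < e/2" using NmD[OF assms(2) K, of "e/2"] e by auto
  show "\<exists>xs. \<forall>x\<in>K. \<bar>f x + g x - combm \<sigma> xs x\<bar> < e"
  proof (intro exI[of _ "xs @ ys"] ballI)
    fix x assume x: "x \<in> K"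
    have "\<bar>f x + g x - combm \<sigma> (xs @ ys) x\<bar> \<le> \<bar>f x - combm \<sigma> xs x\<bar> + \<bar>g x - combm \<sigma> ys x\<bar>"
      unfolding combm_append by (rule order_trans[OF _ abs_triangle_ineq]) simp
    then show "\<bar>f x + g x - combm \<sigma> (xs @ ys) x\<bar> < e" using xs ys x by fastforce
  qed
qed

lemma Nm_scale: assumes "f \<in> Nm \<sigma>" shows "(\<lambda>x. k * f x) \<in> Nm \<sigma>"
  unfolding Nm_def
proof (intro CollectI allI impI, elim conjE)
  fix K :: "(real^'a) set" and e :: real
  assume K: "compact K" and e: "e > 0"
  obtain xs where xs: "\<forall>x\<in>K. \<bar>f x - combm \<sigma> xs x\<bar> < e / (\<bar>k\<bar> + 1)"
    using NmD[OF assms(1) K, of "e / (\<bar>k\<bar> + 1)"] e by auto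
  show "\<exists>xs. \<forall>x\<in>K. \<bar>k * f x - combm \<sigma> xs x\<bar> < e"
  proof (intro exI[of _ "map (\<lambda>(c,a,b). (k*c,a,b)) xs"] ballI)
    fix x assume "x \<in> K"
    then have d: "\<bar>f x - combm \<sigma> xs x\<bar> < e / (\<bar>k\<bar> + 1)" using xs by auto
    have "\<bar>k * f x - k * combm \<sigma> xs x\<bar> = \<bar>k\<bar> * \<bar>f x - combm \<sigma> xs x\<bar>" by (simp add: abs_mult[symmetric] algebra_simps)
    also have "\<dots> \<le> (\<bar>k\<bar> + 1) * \<bar>f x - combm \<sigma> xs x\<bar>" by (simp add: mult_right_mono)
    also have "\<dots> < (\<bar>k\<bar> + 1) * (e / (\<bar>k\<bar> + 1))" using d by (intro mult_strict_left_mono) auto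
    also have "\<dots> = e" by simp
    finally show "\<bar>k * f x - combm \<sigma> (map (\<lambda>(c,a,b). (k*c,a,b)) xs) x\<bar> < e" by (simp only: combm_scale)
  qed
qed

definition esum :: "(real \<times> (real^'m)) list \<Rightarrow> real^'m \<Rightarrow> real" where
  "esum ys x = (\<Sum>(c,a)\<leftarrow>ys. c * exp (a \<bullet> x))"

lemma esum_Nil[simp]: "esum [] x = 0" by (simp add: esum_def)
lemma esum_Cons[simp]: "esum ((c,a) # ys) x = c * exp (a \<bullet> x) + esum ys x" by (simp add: esum_def)
lemma esum_append: "esum (ys @ zs) x = esum ys x + esum zs x" by (simp add: esum_def)

lemma esum_mult1: "c * exp (a \<bullet> x) * esum zs x = esum (map (\<lambda>(d,b). (c*d, a+b)) zs) x"
  by (induction zs) (auto simp: algebra_simps exp_add inner_add_left)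

lemma esum_mult: "esum ys x * esum zs x = esum (concat (map (\<lambda>(c,a). map (\<lambda>(d,b). (c*d, a+b)) zs) ys)) x"
proof (induction ys)
  case Nil then show ?case by simp
next
  case (Cons y ys)
  obtain c a where y: "y = (c, a)" by (cases y)
  show ?case using Cons by (simp add: y esum_append distrib_right esum_mult1)
qed

lemma esum_cont: "continuous_on S (esum ys)"
proof (induction ys)
  case Nil then show ?case by (simp add: esum_def[abs_def])
next
  case (Cons y ys)
  obtain c a where y: "y = (c, a)" by (cases y)
  have e: "esum (y # ys) = (\<lambda>x. c * exp (a \<bullet> x) + esum ys x)" by (simp add: y fun_eq_iff)
  show ?case unfolding e by (intro continuous_on_add continuous_on_mult continuous_on_const continuous_on_exp
      continuous_on_inner continuous_on_id Cons)
qed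

lemma esum_Nm:
  assumes c: "continuous_on UNIV \<sigma>" and np: "\<not> is_polynomial_fun \<sigma>"
  shows "esum ys \<in> (Nm \<sigma> :: (real^'m \<Rightarrow> real) set)"
proof (induction ys)
  case Nil
  have "(\<lambda>x::real^'m. 0 * exp (0 \<bullet> x)) \<in> Nm \<sigma>"
    by (intro Nm_scale Nm_ridge[of exp] cont_in_N[OF c np] continuous_on_exp continuous_on_id)
  then show ?case by (simp add: esum_def[abs_def])
next
  case (Cons y ys)
  obtain cc a where y: "y = (cc, a)" by (cases y)
  have "(\<lambda>x::real^'m. cc * exp (a \<bullet> x) + esum ys x) \<in> Nm \<sigma>"
    by (intro Nm_add Nm_scale Nm_ridge[of exp] cont_in_N[OF c np] continuous_on_exp continuous_on_id Cons)
  moreover have "esum (y # ys) = (\<lambda>x. cc * exp (a \<bullet> x) + esum ys x)" by (simp add: y fun_eq_iff)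
  ultimately show ?case by simp
qed

lemma cont_in_Nm:
  assumes c: "continuous_on UNIV \<sigma>" and np: "\<not> is_polynomial_fun \<sigma>"
    and f: "continuous_on UNIV (f :: real^'m \<Rightarrow> real)"
  shows "f \<in> Nm \<sigma>"
proof (rule Nm_approx)
  fix K :: "(real^'m) set" and e :: real
  assume K: "compact K" and e: "e > 0"
  have "\<exists>g. (\<exists>ys. g = esum ys) \<and> (\<forall>x\<in>K. \<bar>f x - g x\<bar> < e)"
  proof (rule Stone_Weierstrass_HOL[of K "\<lambda>g. \<exists>ys. g = esum ys"])
    show "compact K" by (rule K)
    show "\<exists>ys. (\<lambda>x. c) = esum ys" for c by (intro exI[of _ "[(c, 0)]"]) (simp add: fun_eq_iff)
    show "continuous_on K g" if "\<exists>ys. g = esum ys" for g using that esum_cont by blast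
    show "\<exists>ys. (\<lambda>x. g x + h x) = esum ys" if a: "(\<exists>ys. g = esum ys) \<and> (\<exists>ys. h = esum ys)" for g h
    proof -
      obtain ys zs where "g = esum ys" "h = esum zs" using a by blast
      then show ?thesis by (intro exI[of _ "ys @ zs"]) (simp add: fun_eq_iff esum_append)
    qed
    show "\<exists>ys. (\<lambda>x. g x * h x) = esum ys" if a: "(\<exists>ys. g = esum ys) \<and> (\<exists>ys. h = esum ys)" for g h
    proof -
      obtain ys zs where "g = esum ys" "h = esum zs" using a by blast
      then show ?thesis
        by (intro exI[of _ "concat (map (\<lambda>(c,a). map (\<lambda>(d,b). (c*d, a+b)) zs) ys)"]) (simp add: fun_eq_iff esum_mult)
    qed
    show "\<exists>g. (\<exists>ys. g = esum ys) \<and> g x \<noteq> g y" if a: "x \<in> K \<and> y \<in> K \<and> x \<noteq> y" for x y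
    proof (intro exI[of _ "esum [(1, x - y)]"] conjI)
      show "\<exists>ys. esum [(1, x - y)] = esum ys" by blast
      have "(x - y) \<bullet> x - (x - y) \<bullet> y = (x - y) \<bullet> (x - y)" by (simp add: inner_diff_right)
      moreover have "(x - y) \<bullet> (x - y) > 0" using a by simp
      ultimately have "(x - y) \<bullet> x \<noteq> (x - y) \<bullet> y" by linarith
      then show "esum [(1, x - y)] x \<noteq> esum [(1, x - y)] y" by simp
    qed
    show "continuous_on K f" using f by (rule continuous_on_subset) simp
    show "0 < e" by (rule e)
  qed
  then show "\<exists>g\<in>Nm \<sigma>. \<forall>x\<in>K. \<bar>f x - g x\<bar> < e" using esum_Nm[OF c np] by blast
qed


lemma sum_list_concat': "sum_list (concat xss) = sum_list (map sum_list (xss :: real list list))"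
  by (induction xss) auto

lemma sum_tag:
  fixes XS :: "'n::finite \<Rightarrow> 'b list" and F :: "'b \<Rightarrow> real"
  assumes js: "distinct js" "set js = UNIV"
  defines "L \<equiv> concat (map (\<lambda>j. map (Pair j) (XS j)) js)"
  shows "(\<Sum>k<length L. (\<lambda>(j',z). if j' = j then F z else 0) (L ! k)) = sum_list (map F (XS j))"
proof -
  define H where "H = (\<lambda>(j'::'n, z::'b). if j' = j then F z else 0)"
  have "(\<Sum>k<length L. H (L ! k)) = sum_list (map H L)"
    by (simp add: sum_list_sum_nth atLeast0LessThan)
  also have "\<dots> = sum_list (map (\<lambda>j'. sum_list (map H (map (Pair j') (XS j')))) js)"
    unfolding L_def by (simp add: map_concat sum_list_concat' comp_def)
  also have "\<dots> = sum_list (map (\<lambda>j'. if j' = j then sum_list (map F (XS j)) else 0) js)"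
    by (intro arg_cong[where f=sum_list] map_cong) (auto simp: H_def comp_def)
  also have "\<dots> = (\<Sum>j'\<in>UNIV. if j' = j then sum_list (map F (XS j)) else 0)"
    using js by (simp add: sum_list_distinct_conv_sum_set)
  also have "\<dots> = sum_list (map F (XS j))" by simp
  finally show ?thesis by (simp add: H_def)
qed

lemma NN_dense:
  assumes c: "continuous_on UNIV \<sigma>" and np: "\<not> is_polynomial_fun \<sigma>"
  shows "ucc_dense UNIV UNIV dist (NN \<sigma> :: (real^'m \<Rightarrow> real^'n) set)"
  unfolding ucc_dense_def
proof (intro allI impI, elim conjE)
  fix g :: "real^'m \<Rightarrow> real^'n" and K :: "(real^'m) set" and e :: real
  assume gc: "continuous_on UNIV g" and K: "compact K" and e: "e > 0"
  define e' where "e' = e / real CARD('n)"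
  have e': "e' > 0" using e by (simp add: e'_def)
  have "\<forall>j. \<exists>xs. \<forall>x\<in>K. \<bar>g x $ j - combm \<sigma> xs x\<bar> < e'"
  proof
    fix j
    have "(\<lambda>x. g x $ j) \<in> Nm \<sigma>" by (intro cont_in_Nm[OF c np] continuous_on_component gc)
    then show "\<exists>xs. \<forall>x\<in>K. \<bar>g x $ j - combm \<sigma> xs x\<bar> < e'" using NmD K e' by blast
  qed
  then obtain XS where XS: "\<forall>j. \<forall>x\<in>K. \<bar>g x $ j - combm \<sigma> (XS j) x\<bar> < e'"
    by (rule choice[THEN exE])
  obtain js :: "'n list" where js: "set js = UNIV" "distinct js"
    using finite_distinct_list[of "UNIV :: 'n set"] by auto
  define L where "L = concat (map (\<lambda>j. map (Pair j) (XS j)) js)"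
  define w where "w = length L"
  define Wi where "Wi = (\<lambda>i j'. (fst (snd (snd (L ! i)))) $ j')"
  define bi where "bi = (\<lambda>i. snd (snd (snd (L ! i))))"
  define Wo where "Wo = (\<lambda>j k. if fst (L ! k) = j then fst (snd (L ! k)) else 0)"
  define hh where "hh = (\<lambda>x i. if i < w then \<sigma> ((\<Sum>j\<in>UNIV. Wi i j * x $ j) + bi i) else 0)"
  define f where "f = (\<lambda>x. \<chi> j. (\<Sum>k<w. Wo j k * hh x k) + (\<lambda>_. 0) j)"
  have fNN: "f \<in> NN \<sigma>"
  proof -
    have "nn_hidden \<sigma> hh w" unfolding hh_def by (rule nn_hidden.first)
    then have "\<exists>h w' W b. nn_hidden \<sigma> h w' \<and> f = (\<lambda>x. \<chi> j. (\<Sum>k<w'. W j k * h x k) + b j)"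
      unfolding f_def by (intro exI[of _ hh] exI[of _ w] exI[of _ Wo] exI[of _ "\<lambda>_. 0"]) simp
    then show ?thesis unfolding NN_def by blast
  qed
  have fx: "f x $ j = combm \<sigma> (XS j) x" for x j
  proof -
    have "Wo j k * hh x k = (\<lambda>(j',z). if j' = j then (\<lambda>(c,a,b). c * \<sigma> (a \<bullet> x + b)) z else 0) (L ! k)"
      if k: "k < w" for k
    proof -
      obtain j' c a b where Lk: "L ! k = (j', c, a, b)" by (metis prod.exhaust)
      have "(\<Sum>j\<in>UNIV. Wi k j * x $ j) = a \<bullet> x" by (simp add: Wi_def Lk inner_vec_def)
      then show ?thesis using k by (simp add: Wo_def hh_def bi_def Lk)
    qed
    then have "f x $ j = (\<Sum>k<length L. (\<lambda>(j',z). if j' = j then (\<lambda>(c,a,b). c * \<sigma> (a \<bullet> x + b)) z else 0) (L ! k))"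
      by (simp add: f_def w_def)
    also have "\<dots> = sum_list (map (\<lambda>(c,a,b). c * \<sigma> (a \<bullet> x + b)) (XS j))"
      unfolding L_def by (rule sum_tag[OF js(2,1)])
    also have "\<dots> = combm \<sigma> (XS j) x" by (simp add: combm_def)
    finally show ?thesis .
  qed
  show "\<exists>f\<in>NN \<sigma>. \<forall>x\<in>K. dist (f x) (g x) < e"
  proof (intro bexI[OF _ fNN] ballI)
    fix x assume x: "x \<in> K"
    have "dist (f x) (g x) = norm (f x - g x)" by (simp add: dist_norm)
    also have "\<dots> \<le> (\<Sum>j\<in>UNIV. \<bar>(f x - g x) $ j\<bar>)" by (rule norm_le_l1_cart)
    also have "\<dots> < (\<Sum>j\<in>(UNIV::'n set). e')"
    proof (rule sum_strict_mono)
      fix j :: 'n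
      have "\<bar>(f x - g x) $ j\<bar> = \<bar>g x $ j - combm \<sigma> (XS j) x\<bar>" by (simp add: fx abs_minus_commute)
      then show "\<bar>(f x - g x) $ j\<bar> < e'" using XS x by simp
    qed auto
    also have "\<dots> = e" by (simp add: e'_def)
    finally show "dist (f x) (g x) < e" .
  qed
qed

theorem mainTheorem9:
  fixes \<kappa>d :: "real^'m \<Rightarrow> real^'d^'d"
    and \<kappa>D :: "real^'n \<Rightarrow> real^'D^'D"
    and A :: "real^'d^'d" and B :: "real^'D^'D"
  assumes "CARD('m) = CARD('d) * (CARD('d) + 1) div 2"
    and "CARD('n) = CARD('D) * (CARD('D) + 1) div 2"
    and "linear \<kappa>d" and "inj \<kappa>d" and "range \<kappa>d = sym_mats"
    and "linear \<kappa>D" and "inj \<kappa>D" and "range \<kappa>D = sym_mats"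
    and "A \<in> spd" and "B \<in> spd"
  shows "(\<forall>F :: (real^'m \<Rightarrow> real^'n) set.
            (\<forall>f\<in>F. continuous_on UNIV f) \<and> ucc_dense UNIV UNIV dist F \<longrightarrow>
            ucc_dense spd spd ai_dist
              ((\<lambda>f. RExp B \<circ> \<kappa>D \<circ> f \<circ> inv \<kappa>d \<circ> RLog A) ` F))
       \<and> (\<forall>\<sigma>. continuous_on UNIV \<sigma> \<and> locally_bounded \<sigma> \<and> \<not> is_polynomial_fun \<sigma> \<longrightarrow>
            ucc_dense spd spd ai_dist
              ((\<lambda>f. RExp B \<circ> \<kappa>D \<circ> f \<circ> inv \<kappa>d \<circ> RLog A) ` (NN \<sigma> :: (real^'m \<Rightarrow> real^'n) set)))"
proof (intro conjI allI impI)
  fix F :: "(real^'m \<Rightarrow> real^'n) set"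
  assume "(\<forall>f\<in>F. continuous_on UNIV f) \<and> ucc_dense UNIV UNIV dist F"
  then show "ucc_dense spd spd ai_dist ((\<lambda>f. RExp B \<circ> \<kappa>D \<circ> f \<circ> inv \<kappa>d \<circ> RLog A) ` F)"
    using part1[OF assms(3-10)] by blast
next
  fix \<sigma> :: "real \<Rightarrow> real"
  assume "continuous_on UNIV \<sigma> \<and> locally_bounded \<sigma> \<and> \<not> is_polynomial_fun \<sigma>"
  then have "ucc_dense UNIV UNIV dist (NN \<sigma> :: (real^'m \<Rightarrow> real^'n) set)" using NN_dense by blast
  then show "ucc_dense spd spd ai_dist ((\<lambda>f. RExp B \<circ> \<kappa>D \<circ> f \<circ> inv \<kappa>d \<circ> RLog A) ` (NN \<sigma> :: (real^'m \<Rightarrow> real^'n) set))"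
    using part1[OF assms(3-10)] by blast
qed


end
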